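(* Consider the stationary M/M/1/K queue with arrival rate $\lambda>0$, service rate $\mu>0$, $\rho=\lambda/\mu$, capacity $K\ge1$, queue length process $\{Q(t)\}$ and departure process $\{D(t)\}$. Then $$\lim_{t\to\infty}\mathrm{Cov}\big(D(t),Q(t)\big)=\begin{cases}\rho^{K+1}\dfrac{K^2(\rho-1)^2(1+3\rho^{K+1})-2\rho(\rho^K-1)(-2+\rho+\rho^{K+2})+K(\rho-1)(-1+3\rho-7\rho^{K+1}+5\rho^{K+2})}{2(\rho-1)^2(\rho^{K+1}-1)^3}, & \rho\neq1,\\[1em] -\dfrac{K(K+2)}{24}, & \rho=1.\end{cases}$$
   Context: The M/M/1/K queue: a single server, Poisson arrivals at rate $\lambda$, exponential service with rate $\mu$, and at most $K$ customers in the system (arrivals finding $K$ customers are lost). $Q(t)\in\{0,\dots,K\}$ is the number in system, a birth–death chain with up-rate $\lambda$ and down-rate $\mu$; "stationary" means $Q(0)$ has the stationary distribution $\pi_i=\frac{1-\rho}{1-\rho^{K+1}}\rho^i$ ($\rho\ne1$), $\pi_i=\frac1{K+1}$ ($\rho=1$). $D(t)$ is the number of service completions in $[0,t]$. *)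

theory Defs
  imports Complex_Main
begin

definition mm1k_pi :: "real \<Rightarrow> nat \<Rightarrow> nat \<Rightarrow> real" where
  "mm1k_pi rho K i =
     (if rho = 1 then 1 / real (K + 1)
      else (1 - rho) / (1 - rho ^ (K + 1)) * rho ^ i)"

text \<open>Right-hand side of the Kolmogorov forward equations for the joint law
  p t i n = P(Q(t) = i, D(t) = n) of the Markov process (Q, D):
  arrivals (rate lam, blocked at K) move i to i+1; services (rate mu, only
  when i > 0) move i to i-1 and n to n+1.\<close>
definition mm1k_rhs ::
  "real \<Rightarrow> real \<Rightarrow> nat \<Rightarrow> (real \<Rightarrow> nat \<Rightarrow> nat \<Rightarrow> real) \<Rightarrow> real \<Rightarrow> nat \<Rightarrow> nat \<Rightarrow> real" where
  "mm1k_rhs lam mu K p t i n =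
     (if 1 \<le> i then lam * p t (i - 1) n else 0)
   + (if i + 1 \<le> K \<and> 1 \<le> n then mu * p t (i + 1) (n - 1) else 0)
   - ((if i < K then lam else 0) + (if 0 < i then mu else 0)) * p t i n"

definition mm1k_ED :: "nat \<Rightarrow> (real \<Rightarrow> nat \<Rightarrow> nat \<Rightarrow> real) \<Rightarrow> real \<Rightarrow> real" where
  "mm1k_ED K p t = (\<Sum>n. \<Sum>i\<le>K. real n * p t i n)"

definition mm1k_EQ :: "nat \<Rightarrow> (real \<Rightarrow> nat \<Rightarrow> nat \<Rightarrow> real) \<Rightarrow> real \<Rightarrow> real" where
  "mm1k_EQ K p t = (\<Sum>n. \<Sum>i\<le>K. real i * p t i n)"

definition mm1k_EDQ :: "nat \<Rightarrow> (real \<Rightarrow> nat \<Rightarrow> nat \<Rightarrow> real) \<Rightarrow> real \<Rightarrow> real" where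
  "mm1k_EDQ K p t = (\<Sum>n. \<Sum>i\<le>K. real n * real i * p t i n)"

definition mm1k_cov :: "nat \<Rightarrow> (real \<Rightarrow> nat \<Rightarrow> nat \<Rightarrow> real) \<Rightarrow> real \<Rightarrow> real" where
  "mm1k_cov K p t = mm1k_EDQ K p t - mm1k_ED K p t * mm1k_EQ K p t"

definition mm1k_cov_limit :: "real \<Rightarrow> nat \<Rightarrow> real" where
  "mm1k_cov_limit rho K =
    (if rho = 1 then - (real K * (real K + 2) / 24)
     else rho ^ (K + 1) *
       (real K ^ 2 * (rho - 1) ^ 2 * (1 + 3 * rho ^ (K + 1))
        - 2 * rho * (rho ^ K - 1) * (-2 + rho + rho ^ (K + 2))
        + real K * (rho - 1) * (-1 + 3 * rho - 7 * rho ^ (K + 1) + 5 * rho ^ (K + 2)))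
       / (2 * (rho - 1) ^ 2 * (rho ^ (K + 1) - 1) ^ 3))"

end

theory Submission
  imports Defs "HOL-Analysis.Analysis"
begin

lemma decr_Icc:
  fixes f f' :: "real \<Rightarrow> real"
  assumes T: "0 \<le> T"
    and d: "\<And>t. 0 \<le> t \<Longrightarrow> t \<le> T \<Longrightarrow> (f has_real_derivative f' t) (at t within {0..T})"
    and n: "\<And>t. 0 \<le> t \<Longrightarrow> t \<le> T \<Longrightarrow> f' t \<le> 0"
  shows "f T \<le> f 0"
proof -
  have c: "continuous_on {0..T} (\<lambda>t. - f t)"
    by (intro continuous_intros DERIV_continuous_on[of _ _ f']) (use d in auto)
  have "- f 0 \<le> - f T"
  proof (rule DERIV_nonneg_imp_increasing_open[OF T _ c])
    fix x assume x: "0 < x" "x < T"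
    have "(f has_real_derivative f' x) (at x)"
      using d[of x] x at_within_Icc_at[of 0 x T] by auto
    then have "((\<lambda>t. - f t) has_real_derivative - f' x) (at x)"
      by (rule derivative_intros)
    then show "\<exists>y. ((\<lambda>t. - f t) has_real_derivative y) (at x) \<and> 0 \<le> y"
      using n[of x] x by force
  qed
  then show ?thesis by simp
qed

definition Lop :: "real \<Rightarrow> real \<Rightarrow> nat \<Rightarrow> (nat \<Rightarrow> real) \<Rightarrow> nat \<Rightarrow> real" where
  "Lop lam mu K v i = (if 1 \<le> i then lam * v (i - 1) else 0)
     - ((if i < K then lam else 0) + (if 0 < i then mu else 0)) * v i"
definition Sop :: "real \<Rightarrow> nat \<Rightarrow> (nat \<Rightarrow> real) \<Rightarrow> nat \<Rightarrow> real" where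
  "Sop mu K w i = (if i + 1 \<le> K then mu * w (i + 1) else 0)"
definition gen :: "real \<Rightarrow> real \<Rightarrow> nat \<Rightarrow> (nat \<Rightarrow> real) \<Rightarrow> nat \<Rightarrow> real" where
  "gen lam mu K v i = Lop lam mu K v i + Sop mu K v i"

lemma rhs_eq: "mm1k_rhs lam mu K p t i n = Lop lam mu K (\<lambda>j. p t j n) i
   + (if 1 \<le> n then Sop mu K (\<lambda>j. p t j (n - 1)) i else 0)"
  by (simp add: mm1k_rhs_def Lop_def Sop_def)

lemma sum_shift_down: "(\<Sum>i::nat\<le>K. (if 1 \<le> i then f (i - 1) else 0)) = (\<Sum>i<K. f i :: real)"
  by (induction K) auto

lemma sum_shift_up: "(\<Sum>i::nat\<le>K. (if i + 1 \<le> K then f (i + 1) else 0)) = (\<Sum>i<K. f (Suc i) :: real)"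
  by (rule sum.mono_neutral_cong_right) auto

lemma sum_Suc_le: assumes "\<And>i. f i \<ge> 0" shows "(\<Sum>i<K. f (Suc i)) \<le> (\<Sum>i\<le>(K::nat). f i :: real)"
proof -
  have "(\<Sum>i\<le>K. f i) = f 0 + (\<Sum>i<K. f (Suc i))"
    by (metis lessThan_Suc_atMost sum.lessThan_Suc_shift)
  then show ?thesis using assms[of 0] by simp
qed

lemma sum_lt_le: assumes "\<And>i. f i \<ge> 0" shows "(\<Sum>i<K. f i) \<le> (\<Sum>i\<le>(K::nat). f i :: real)"
  by (rule sum_mono2) (auto simp: assms)

lemma two_ab: "2 * a * b \<le> a\<^sup>2 + (b::real)\<^sup>2"
  using sum_power2_ge_zero[of "a - b" 0] by (simp add: power2_diff)

lemma energy:
  assumes lam: "lam \<ge> 0" and mu: "mu \<ge> 0"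
  shows "2 * (\<Sum>i\<le>K. v i * (Lop lam mu K v i + Sop mu K w i))
     \<le> (2*lam + mu) * (\<Sum>i\<le>K. (v i)\<^sup>2) + mu * (\<Sum>i\<le>K. (w i)\<^sup>2)"
proof -
  have tm: "2 * (v i * (Lop lam mu K v i + Sop mu K w i)) \<le> (lam + mu) * (v i)\<^sup>2
     + lam * (if 1 \<le> i then (v (i - 1))\<^sup>2 else 0) + mu * (if i + 1 \<le> K then (w (i + 1))\<^sup>2 else 0)" for i
  proof -
    have a: "lam * (2 * v i * v (i - 1)) \<le> lam * ((v i)\<^sup>2 + (v (i - 1))\<^sup>2)"
      by (rule mult_left_mono[OF two_ab lam])
    have b: "mu * (2 * v i * w (i + 1)) \<le> mu * ((v i)\<^sup>2 + (w (i + 1))\<^sup>2)"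
      by (rule mult_left_mono[OF two_ab mu])
    have c: "0 \<le> ((if i < K then lam else 0) + (if 0 < i then mu else 0)) * (v i)\<^sup>2"
      using lam mu by auto
    have d: "0 \<le> lam * (v i)\<^sup>2" "0 \<le> mu * (v i)\<^sup>2" using lam mu by auto
    show ?thesis using a b c d
      by (auto simp: Lop_def Sop_def algebra_simps power2_eq_square)
  qed
  have "2 * (\<Sum>i\<le>K. v i * (Lop lam mu K v i + Sop mu K w i))
      = (\<Sum>i\<le>K. 2 * (v i * (Lop lam mu K v i + Sop mu K w i)))" by (simp add: sum_distrib_left)
  also have "\<dots> \<le> (\<Sum>i\<le>K. (lam + mu) * (v i)\<^sup>2
     + lam * (if 1 \<le> i then (v (i - 1))\<^sup>2 else 0) + mu * (if i + 1 \<le> K then (w (i + 1))\<^sup>2 else 0))"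
    by (rule sum_mono) (rule tm)
  also have "\<dots> = (lam + mu) * (\<Sum>i\<le>K. (v i)\<^sup>2) + lam * (\<Sum>i<K. (v i)\<^sup>2) + mu * (\<Sum>i<K. (w (Suc i))\<^sup>2)"
  proof -
    have e1: "(\<Sum>i\<le>K. lam * (if 1 \<le> i then (v (i - 1))\<^sup>2 else 0)) = lam * (\<Sum>i<K. (v i)\<^sup>2)"
      using sum_shift_down[where K=K and f="\<lambda>j. (v j)\<^sup>2"] by (simp only: sum_distrib_left[symmetric]; simp)
    have e2: "(\<Sum>i\<le>K. mu * (if i + 1 \<le> K then (w (i + 1))\<^sup>2 else 0)) = mu * (\<Sum>i<K. (w (Suc i))\<^sup>2)"
      using sum_shift_up[where K=K and f="\<lambda>j. (w j)\<^sup>2"] by (simp only: sum_distrib_left[symmetric]; simp)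
    show ?thesis using e1 e2 by (simp add: sum.distrib sum_distrib_left)
  qed
  also have "\<dots> \<le> (lam + mu) * (\<Sum>i\<le>K. (v i)\<^sup>2) + lam * (\<Sum>i\<le>K. (v i)\<^sup>2) + mu * (\<Sum>i\<le>K. (w i)\<^sup>2)"
    using mult_left_mono[OF sum_lt_le[where f="\<lambda>i. (v i)\<^sup>2" and K=K] lam]
      mult_left_mono[OF sum_Suc_le[where f="\<lambda>i. (w i)\<^sup>2" and K=K] mu] by auto
  finally show ?thesis by (simp add: algebra_simps)
qed

locale mm1k =
  fixes lam mu :: real and K :: nat and p :: "real \<Rightarrow> nat \<Rightarrow> nat \<Rightarrow> real"
  assumes lam: "lam > 0" and mu: "mu > 0" and K: "K \<ge> 1"
    and init: "\<forall>i\<le>K. \<forall>n. p 0 i n = (if n = 0 then mm1k_pi (lam / mu) K i else 0)"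
    and forward: "\<forall>t\<ge>0. \<forall>i\<le>K. \<forall>n.
        ((\<lambda>s. p s i n) has_real_derivative mm1k_rhs lam mu K p t i n) (at t within {0..})"
begin

definition "rhs t i n = mm1k_rhs lam mu K p t i n"

lemma deriv_p: "0 \<le> t \<Longrightarrow> t \<le> T \<Longrightarrow> i \<le> K \<Longrightarrow>
   ((\<lambda>s. p s i n) has_real_derivative rhs t i n) (at t within {0..T})"
proof -
  assume a: "0 \<le> t" "t \<le> T" "i \<le> K"
  have "((\<lambda>s. p s i n) has_real_derivative rhs t i n) (at t within {0..})"
    using forward a unfolding rhs_def by auto
  then show ?thesis by (rule DERIV_subset) auto
qed

definition "E n t = (\<Sum>i\<le>K. (p t i n)\<^sup>2)"
definition "cc = 2 * lam + mu"
definition "M0 = E 0 0"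

lemma deriv_E: "0 \<le> t \<Longrightarrow> t \<le> T \<Longrightarrow>
   ((\<lambda>s. E n s) has_real_derivative 2 * (\<Sum>i\<le>K. p t i n * rhs t i n)) (at t within {0..T})"
  unfolding E_def
  by (auto intro!: derivative_eq_intros deriv_p simp: sum_distrib_left mult_ac)

lemma E_deriv_le: "2 * (\<Sum>i\<le>K. p t i n * rhs t i n) \<le> cc * E n t + (if 1 \<le> n then mu * E (n - 1) t else 0)"
proof -
  let ?w = "\<lambda>j. if 1 \<le> n then p t j (n - 1) else 0"
  have "rhs t i n = Lop lam mu K (\<lambda>j. p t j n) i + Sop mu K ?w i" for i
    by (simp add: rhs_def rhs_eq Sop_def)
  then have "2 * (\<Sum>i\<le>K. p t i n * rhs t i n) \<le> (2*lam + mu) * (\<Sum>i\<le>K. (p t i n)\<^sup>2) + mu * (\<Sum>i\<le>K. (?w i)\<^sup>2)"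
    using energy[where lam=lam and mu=mu and K=K and v="\<lambda>j. p t j n" and w= ?w] lam mu by simp
  also have "\<dots> = cc * E n t + (if 1 \<le> n then mu * E (n - 1) t else 0)"
    by (simp add: cc_def E_def)
  finally show ?thesis .
qed

lemma E_nonneg: "E n t \<ge> 0" unfolding E_def by (auto intro: sum_nonneg)

lemma E_init: "1 \<le> n \<Longrightarrow> E n 0 = 0"
  using init unfolding E_def by simp

lemma deriv_pow_fact: "((\<lambda>s. (mu * s) ^ Suc m / fact (Suc m)) has_real_derivative mu * ((mu * t) ^ m / fact m)) (at t within S)"
proof -
  have "((\<lambda>s. (mu * s) ^ Suc m) has_real_derivative real (Suc m) * (mu * (mu * t) ^ m)) (at t within S)"
    by (rule derivative_eq_intros refl | simp)+
  then have "((\<lambda>s. (mu * s) ^ Suc m / fact (Suc m)) has_real_derivative real (Suc m) * (mu * (mu * t) ^ m) / fact (Suc m)) (at t within S)"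
    by (rule DERIV_cdivide)
  moreover have "real (Suc m) * (mu * (mu * t) ^ m) / fact (Suc m) = mu * ((mu * t) ^ m / fact m)"
    by (simp add: fact_Suc del: of_nat_Suc)
  ultimately show ?thesis by simp
qed

lemma F_bound: "0 \<le> t \<Longrightarrow> exp (- cc * t) * E n t \<le> M0 * ((mu * t) ^ n / fact n)"
proof (induction n arbitrary: t)
  case 0
  define f where "f s = exp (- cc * s) * E 0 s" for s
  have "f t \<le> f 0"
  proof (rule decr_Icc[OF 0])
    fix s assume s: "0 \<le> s" "s \<le> t"
    show "(f has_real_derivative exp (- cc * s) * (2 * (\<Sum>i\<le>K. p s i 0 * rhs s i 0) - cc * E 0 s)) (at s within {0..t})"
      unfolding f_def
      by (rule derivative_eq_intros deriv_E[OF s] refl | simp add: algebra_simps)+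
    show "exp (- cc * s) * (2 * (\<Sum>i\<le>K. p s i 0 * rhs s i 0) - cc * E 0 s) \<le> 0"
      using E_deriv_le[of s 0] by (intro mult_nonneg_nonpos) auto
  qed
  then show ?case by (simp add: f_def M0_def)
next
  case (Suc m)
  define f where "f s = exp (- cc * s) * E (Suc m) s - M0 * ((mu * s) ^ Suc m / fact (Suc m))" for s
  have "f t \<le> f 0"
  proof (rule decr_Icc[OF Suc.prems])
    fix s assume s: "0 \<le> s" "s \<le> t"
    show "(f has_real_derivative exp (- cc * s) * (2 * (\<Sum>i\<le>K. p s i (Suc m) * rhs s i (Suc m)) - cc * E (Suc m) s)
        - M0 * (mu * ((mu * s) ^ m / fact m))) (at s within {0..t})"
      unfolding f_def
      by (rule derivative_eq_intros deriv_E[OF s] deriv_pow_fact refl | simp add: algebra_simps)+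
    have "exp (- cc * s) * (2 * (\<Sum>i\<le>K. p s i (Suc m) * rhs s i (Suc m)) - cc * E (Suc m) s)
       \<le> exp (- cc * s) * (mu * E m s)"
      using E_deriv_le[of s "Suc m"] by (intro mult_left_mono) auto
    also have "\<dots> = mu * (exp (- cc * s) * E m s)" by simp
    also have "\<dots> \<le> mu * (M0 * ((mu * s) ^ m / fact m))"
      using Suc.IH[OF s(1)] mu by (intro mult_left_mono) auto
    finally show "exp (- cc * s) * (2 * (\<Sum>i\<le>K. p s i (Suc m) * rhs s i (Suc m)) - cc * E (Suc m) s)
        - M0 * (mu * ((mu * s) ^ m / fact m)) \<le> 0" by (simp add: algebra_simps)
  qed
  then show ?case by (simp add: f_def E_init)
qed

end

lemma series_deriv:
  fixes f f' :: "nat \<Rightarrow> real \<Rightarrow> real"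
  assumes T: "0 \<le> T"
    and d: "\<And>n t. 0 \<le> t \<Longrightarrow> t \<le> T \<Longrightarrow> (f n has_real_derivative f' n t) (at t within {0..T})"
    and b: "\<And>n t. 0 \<le> t \<Longrightarrow> t \<le> T \<Longrightarrow> \<bar>f' n t\<bar> \<le> Mb n"
    and s: "summable Mb" and s0: "summable (\<lambda>n. f n 0)"
    and t: "0 \<le> t" "t \<le> T"
  shows "summable (\<lambda>n. f n t)"
    "((\<lambda>t. \<Sum>n. f n t) has_real_derivative (\<Sum>n. f' n t)) (at t within {0..T})"
proof -
  have u: "uniform_limit {0..T} (\<lambda>n x. \<Sum>i<n. f' i x) (\<lambda>x. \<Sum>i. f' i x) sequentially"
    by (rule Weierstrass_m_test[OF _ s]) (use b in auto)
  obtain g where g: "\<forall>x\<in>{0..T}. (\<lambda>n. f n x) sums g x \<and>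
      (g has_field_derivative (\<Sum>i. f' i x)) (at x within {0..T})"
    using has_field_derivative_series[OF convex_real_interval(5)[of 0 T] _ u, of f 0] d s0 T by auto
  from g t show "summable (\<lambda>n. f n t)" by (auto simp: sums_iff)
  have "(g has_field_derivative (\<Sum>i. f' i t)) (at t within {0..T})" using g t by auto
  then show "((\<lambda>t. \<Sum>n. f n t) has_real_derivative (\<Sum>n. f' n t)) (at t within {0..T})"
  proof (rule has_field_derivative_transform_within[OF _ zero_less_one])
    show "t \<in> {0..T}" using t by simp
    fix x assume "x \<in> {0..T}"
    then have "(\<lambda>n. f n x) sums g x" using g by blast
    then show "g x = (\<Sum>n. f n x)" by (rule sums_unique)
  qed
qed

lemma sqrt_le_am: assumes "u \<ge> 0" shows "sqrt u \<le> (u * 4 ^ n + (1/4) ^ n) / 2"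
proof -
  have "2 * (sqrt u * 2 ^ n) * ((1/2) ^ n) \<le> (sqrt u * 2 ^ n)\<^sup>2 + ((1/2) ^ n)\<^sup>2"
    by (rule two_ab)
  moreover have "(2::real) ^ n * (1/2) ^ n = 1"
    by (simp add: power_mult_distrib[symmetric])
  moreover have "(2::real) ^ n * 2 ^ n = 4 ^ n"
    by (simp add: power_mult_distrib[symmetric])
  moreover have "(1/2::real) ^ n * (1/2) ^ n = (1/4) ^ n"
    by (simp add: power_mult_distrib[symmetric])
  moreover have "sqrt u * (sqrt u * 4 ^ n) = u * 4 ^ n" using assms by (simp add: mult.assoc[symmetric])
  ultimately have "sqrt u * 2 \<le> u * 4 ^ n + (1 / 4) ^ n" by (simp add: power2_eq_square algebra_simps)
  then show ?thesis by simp
qed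

context mm1k begin
definition "AA T = exp (cc * T) * M0"
definition "bnd T n = (AA T * (4 * (mu * T)) ^ n / fact n + (1/4) ^ n) / 2"

lemma M0_nonneg: "M0 \<ge> 0" unfolding M0_def by (rule E_nonneg)
lemma cc_pos: "cc > 0" using lam mu by (simp add: cc_def)

lemma p_bound:
  assumes t: "0 \<le> t" "t \<le> T" and i: "i \<le> K"
  shows "\<bar>p t i n\<bar> \<le> bnd T n"
proof -
  have "(p t i n)\<^sup>2 \<le> E n t" unfolding E_def
    by (rule member_le_sum[where f="\<lambda>i. (p t i n)\<^sup>2"]) (use i in auto)
  also have "E n t = exp (cc * t) * (exp (- cc * t) * E n t)"
    by (simp add: exp_minus)
  also have "\<dots> \<le> exp (cc * t) * (M0 * ((mu * t) ^ n / fact n))"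
    by (rule mult_left_mono[OF F_bound[OF t(1)]]) simp
  also have "\<dots> \<le> exp (cc * T) * (M0 * ((mu * T) ^ n / fact n))"
  proof (rule mult_mono)
    show "exp (cc * t) \<le> exp (cc * T)" using cc_pos t by simp
    have "(mu * t) ^ n \<le> (mu * T) ^ n" using mu t by (intro power_mono) auto
    then show "M0 * ((mu * t) ^ n / fact n) \<le> M0 * ((mu * T) ^ n / fact n)"
      using M0_nonneg by (intro mult_left_mono divide_right_mono) auto
    show "0 \<le> M0 * ((mu * t) ^ n / fact n)" using M0_nonneg mu t by simp
  qed simp
  finally have "\<bar>p t i n\<bar> \<le> sqrt (AA T * ((mu * T) ^ n / fact n))"
    unfolding AA_def mult.assoc by (metis real_sqrt_le_mono real_sqrt_abs)
  also have "\<dots> \<le> (AA T * ((mu * T) ^ n / fact n) * 4 ^ n + (1/4) ^ n) / 2"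
    by (rule sqrt_le_am) (use t mu M0_nonneg in \<open>auto simp: AA_def\<close>)
  also have "AA T * ((mu * T) ^ n / fact n) * 4 ^ n = AA T * (4 * (mu * T)) ^ n / fact n"
    by (simp add: power_mult_distrib)
  finally show ?thesis unfolding bnd_def .
qed
lemma bnd_nonneg: "0 \<le> T \<Longrightarrow> bnd T n \<ge> 0"
  unfolding bnd_def AA_def using M0_nonneg mu by auto

lemma summable_bnd1: assumes T: "0 \<le> T" shows "summable (\<lambda>n. real (Suc n) * bnd T n)"
proof (rule summable_comparison_test)
  show "summable (\<lambda>n. (AA T * (inverse (fact n) * (8 * (mu * T)) ^ n) + (1/2) ^ n) / 2)"
    by (intro summable_divide summable_add summable_mult summable_exp summable_geometric) auto
  have le: "real (Suc n) \<le> 2 ^ n" for n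
    using less_exp[of n] by (metis Suc_leI of_nat_le_iff of_nat_numeral of_nat_power)
  show "\<exists>N. \<forall>n\<ge>N. norm (real (Suc n) * bnd T n) \<le> (AA T * (inverse (fact n) * (8 * (mu * T)) ^ n) + (1/2) ^ n) / 2"
  proof (intro exI allI impI)
    fix n :: nat
    have A: "AA T \<ge> 0" unfolding AA_def using M0_nonneg by auto
    have y: "(4 * (mu * T)) ^ n \<ge> 0" using mu T by auto
    have e8: "(8 * (mu * T)) ^ n = 2 ^ n * (4 * (mu * T)) ^ n"
      unfolding power_mult_distrib[symmetric] by simp
    have e2: "(1/2::real) ^ n = 2 ^ n * (1/4) ^ n"
      unfolding power_mult_distrib[symmetric] by simp
    have "real (Suc n) * (AA T * (4 * (mu * T)) ^ n / fact n) \<le> 2 ^ n * (AA T * (4 * (mu * T)) ^ n / fact n)"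
      by (rule mult_right_mono[OF le]) (use A y in auto)
    also have "\<dots> = AA T * (inverse (fact n) * (8 * (mu * T)) ^ n)"
      unfolding e8 by (simp add: divide_inverse)
    finally have 1: "real (Suc n) * (AA T * (4 * (mu * T)) ^ n / fact n) \<le> AA T * (inverse (fact n) * (8 * (mu * T)) ^ n)" .
    have "real (Suc n) * (1/4) ^ n \<le> 2 ^ n * (1/4::real) ^ n"
      by (rule mult_right_mono[OF le]) auto
    then have 2: "real (Suc n) * (1/4::real) ^ n \<le> (1/2) ^ n" unfolding e2 .
    have "norm (real (Suc n) * bnd T n) = real (Suc n) * bnd T n" using bnd_nonneg[OF T, of n] by simp
    also have "\<dots> = (real (Suc n) * (AA T * (4 * (mu * T)) ^ n / fact n) + real (Suc n) * (1/4) ^ n) / 2"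
      unfolding bnd_def by (simp only: times_divide_eq_right distrib_left)
    also have "\<dots> \<le> (AA T * (inverse (fact n) * (8 * (mu * T)) ^ n) + (1/2) ^ n) / 2"
      by (rule divide_right_mono[OF add_mono[OF 1 2]]) simp
    finally show "norm (real (Suc n) * bnd T n) \<le> (AA T * (inverse (fact n) * (8 * (mu * T)) ^ n) + (1/2) ^ n) / 2" .
  qed
qed

end

lemma Lop_bound:
  assumes "lam \<ge> 0" "mu \<ge> 0" "\<And>j. j \<le> K \<Longrightarrow> \<bar>v j\<bar> \<le> B" "i \<le> K"
  shows "\<bar>Lop lam mu K v i\<bar> \<le> (2*lam + mu) * B"
proof -
  have vi: "\<bar>v i\<bar> \<le> B" using assms by auto
  have 1: "\<bar>(if 1 \<le> i then lam * v (i - 1) else 0)\<bar> \<le> lam * B"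
  proof (cases "1 \<le> i")
    case True
    then have "\<bar>v (i - 1)\<bar> \<le> B" using assms by auto
    then show ?thesis using True assms(1) by (simp add: abs_mult mult_left_mono)
  next
    case False then show ?thesis using assms(1) vi by simp
  qed
  have c: "0 \<le> (if i < K then lam else 0) + (if 0 < i then mu else (0::real))"
          "(if i < K then lam else 0) + (if 0 < i then mu else 0) \<le> lam + mu"
    using assms by auto
  have 2: "\<bar>((if i < K then lam else 0) + (if 0 < i then mu else 0)) * v i\<bar> \<le> (lam + mu) * B"
    unfolding abs_mult using c vi by (intro mult_mono) auto
  show ?thesis unfolding Lop_def
    using abs_triangle_ineq4[of "(if 1 \<le> i then lam * v (i - 1) else 0)"
        "((if i < K then lam else 0) + (if 0 < i then mu else 0)) * v i"] 1 2
    by (simp add: algebra_simps)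
qed

lemma Sop_bound:
  assumes "mu \<ge> 0" "\<And>j. j \<le> K \<Longrightarrow> \<bar>w j\<bar> \<le> B" "B \<ge> 0"
  shows "\<bar>Sop mu K w i\<bar> \<le> mu * B"
  using assms by (auto simp: Sop_def abs_mult intro: mult_left_mono)

lemma Lop_sums:
  assumes "\<And>j. j \<le> K \<Longrightarrow> (\<lambda>n. v n j) sums s j" "i \<le> K"
  shows "(\<lambda>n. Lop lam mu K (v n) i) sums Lop lam mu K s i"
proof (cases "1 \<le> i")
  case True
  have "(\<lambda>n. lam * v n (i - 1) - ((if i < K then lam else 0) + (if 0 < i then mu else 0)) * v n i) sums
        (lam * s (i - 1) - ((if i < K then lam else 0) + (if 0 < i then mu else 0)) * s i)"
    using assms by (intro sums_diff sums_mult) auto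
  then show ?thesis using True by (simp add: Lop_def)
next
  case False
  have "(\<lambda>n. 0 - ((if i < K then lam else 0) + (if 0 < i then mu else 0)) * v n i) sums
        (0 - ((if i < K then lam else 0) + (if 0 < i then mu else 0)) * s i)"
    using assms by (intro sums_diff sums_mult sums_zero) auto
  then show ?thesis using False by (simp add: Lop_def)
qed

lemma Lop_scale: "c * Lop lam mu K v i = Lop lam mu K (\<lambda>j. c * v j) i"
  by (simp add: Lop_def algebra_simps)

lemma Sop_sums:
  assumes "\<And>j. j \<le> K \<Longrightarrow> (\<lambda>n. w n j) sums s j"
  shows "(\<lambda>n. Sop mu K (w n) i) sums Sop mu K s i"
  using assms by (cases "i + 1 \<le> K") (auto simp: Sop_def intro: sums_mult)

lemma Sop_shift_sums:
  assumes "\<And>j. j \<le> K \<Longrightarrow> (\<lambda>n. w n j) sums s j"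
  shows "(\<lambda>n. if 1 \<le> n then Sop mu K (w (n - 1)) i else 0) sums Sop mu K s i"
proof -
  have "(\<lambda>n. (\<lambda>n. if 1 \<le> n then Sop mu K (w (n - 1)) i else 0) (Suc n)) sums Sop mu K s i"
    using Sop_sums[OF assms] by simp
  then show ?thesis by (subst (asm) sums_Suc_iff) simp
qed

lemma Sop_shift_sums_n:
  assumes "\<And>j. j \<le> K \<Longrightarrow> (\<lambda>n. w n j) sums s j"
    and "\<And>j. j \<le> K \<Longrightarrow> (\<lambda>n. real n * w n j) sums r j"
  shows "(\<lambda>n. real n * (if 1 \<le> n then Sop mu K (w (n - 1)) i else 0)) sums (Sop mu K r i + Sop mu K s i)"
proof -
  have "(\<lambda>n. Sop mu K (\<lambda>j. real n * w n j) i + Sop mu K (w n) i) sums (Sop mu K r i + Sop mu K s i)"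
    by (intro sums_add Sop_sums assms)
  moreover have "Sop mu K (\<lambda>j. real n * w n j) i + Sop mu K (w n) i
      = (\<lambda>n. real n * (if 1 \<le> n then Sop mu K (w (n - 1)) i else 0)) (Suc n)" for n
    by (simp add: Sop_def algebra_simps)
  ultimately have "(\<lambda>n. (\<lambda>n. real n * (if 1 \<le> n then Sop mu K (w (n - 1)) i else 0)) (Suc n)) sums (Sop mu K r i + Sop mu K s i)"
    by simp
  then show ?thesis by (subst (asm) sums_Suc_iff) simp
qed

context mm1k begin

definition "aa j t = (\<Sum>n. p t j n)"
definition "mm j t = (\<Sum>n. real n * p t j n)"

lemma rhs_bound:
  assumes t: "0 \<le> t" "t \<le> T" and i: "i \<le> K"
  shows "\<bar>rhs t i n\<bar> \<le> (2*lam + 2*mu) * (bnd T n + bnd T (n - 1))"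
proof -
  have T: "0 \<le> T" using t by simp
  have 1: "\<bar>Lop lam mu K (\<lambda>j. p t j n) i\<bar> \<le> (2*lam + mu) * bnd T n"
    using lam mu i p_bound[OF t] by (intro Lop_bound) auto
  have 2: "\<bar>(if 1 \<le> n then Sop mu K (\<lambda>j. p t j (n - 1)) i else 0)\<bar> \<le> mu * bnd T (n - 1)"
    using mu p_bound[OF t] bnd_nonneg[OF T] by (auto intro!: Sop_bound)
  have 3: "(2*lam + mu) * bnd T n + mu * bnd T (n - 1) \<le> (2*lam + 2*mu) * (bnd T n + bnd T (n - 1))"
    using bnd_nonneg[OF T, of n] bnd_nonneg[OF T, of "n - 1"] lam mu
    by (simp add: algebra_simps)
  show ?thesis unfolding rhs_def rhs_eq
    using abs_triangle_ineq[of "Lop lam mu K (\<lambda>j. p t j n) i"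
        "(if 1 \<le> n then Sop mu K (\<lambda>j. p t j (n - 1)) i else 0)"] 1 2 3 by linarith
qed

lemma summable_bnd: assumes T: "0 \<le> T" shows "summable (bnd T)"
proof (rule summable_comparison_test'[OF summable_bnd1[OF T], of 0])
  fix n :: nat
  have "bnd T n \<le> real (Suc n) * bnd T n"
    using bnd_nonneg[OF T, of n] by (intro mult_le_cancel_right1[THEN iffD2] disjI1) (auto intro: mult_right_mono)
  then show "norm (bnd T n) \<le> real (Suc n) * bnd T n" using bnd_nonneg[OF T, of n] by simp
qed

lemma summable_bnd_n: assumes T: "0 \<le> T" shows "summable (\<lambda>n. real n * bnd T n)"
  by (rule summable_comparison_test'[OF summable_bnd1[OF T], of 0])
    (use bnd_nonneg[OF T] in \<open>auto simp: mult_right_mono\<close>)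

lemma summable_bnd_shift: "0 \<le> T \<Longrightarrow> summable (\<lambda>n. bnd T (n - 1))"
  using summable_bnd[of T] by (subst summable_Suc_iff[symmetric]) simp

lemma summable_bnd_n_shift: "0 \<le> T \<Longrightarrow> summable (\<lambda>n. real n * bnd T (n - 1))"
  using summable_bnd1[of T] by (subst summable_Suc_iff[symmetric]) simp

lemma p0_sums: "i \<le> K \<Longrightarrow> (\<lambda>n. p 0 i n) sums mm1k_pi (lam / mu) K i"
proof -
  assume i: "i \<le> K"
  have "(\<lambda>n. if n = 0 then mm1k_pi (lam / mu) K i else 0) sums mm1k_pi (lam / mu) K i"
    using sums_single[of 0 "\<lambda>_. mm1k_pi (lam / mu) K i"] by simp
  then show ?thesis using init i by simp
qed

lemma p0_sums_n: "i \<le> K \<Longrightarrow> (\<lambda>n. real n * p 0 i n) sums 0"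
proof -
  assume "i \<le> K"
  then have "(\<lambda>n. real n * p 0 i n) = (\<lambda>n. 0)" using init by auto
  then show ?thesis by simp
qed

lemma aa_series:
  assumes t: "0 \<le> t" "t \<le> T" and i: "i \<le> K"
  shows "summable (\<lambda>n. p t i n)"
    "((\<lambda>t. aa i t) has_real_derivative (\<Sum>n. rhs t i n)) (at t within {0..T})"
proof -
  have T: "0 \<le> T" using t by simp
  have s: "summable (\<lambda>n. (2*lam + 2*mu) * (bnd T n + bnd T (n - 1)))"
    by (intro summable_mult summable_add summable_bnd summable_bnd_shift T)
  note * = series_deriv[where f="\<lambda>n t. p t i n" and f'="\<lambda>n t. rhs t i n", OF T deriv_p[OF _ _ i] rhs_bound[OF _ _ i] s
      sums_summable[OF p0_sums[OF i]] t]
  show "summable (\<lambda>n. p t i n)" by (rule *(1))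
  show "((\<lambda>t. aa i t) has_real_derivative (\<Sum>n. rhs t i n)) (at t within {0..T})"
    unfolding aa_def by (rule *(2))
qed

lemma mm_series:
  assumes t: "0 \<le> t" "t \<le> T" and i: "i \<le> K"
  shows "summable (\<lambda>n. real n * p t i n)"
    "((\<lambda>t. mm i t) has_real_derivative (\<Sum>n. real n * rhs t i n)) (at t within {0..T})"
proof -
  have T: "0 \<le> T" using t by simp
  have s: "summable (\<lambda>n. (2*lam + 2*mu) * (real n * bnd T n + real n * bnd T (n - 1)))"
    by (intro summable_mult summable_add summable_bnd_n summable_bnd_n_shift T)
  have b: "\<bar>real n * rhs t i n\<bar> \<le> (2*lam + 2*mu) * (real n * bnd T n + real n * bnd T (n - 1))"
    if "0 \<le> t" "t \<le> T" for n t
  proof -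
    have "\<bar>real n * rhs t i n\<bar> = real n * \<bar>rhs t i n\<bar>" by (simp add: abs_mult)
    also have "\<dots> \<le> real n * ((2*lam + 2*mu) * (bnd T n + bnd T (n - 1)))"
      by (rule mult_left_mono[OF rhs_bound[OF that i]]) simp
    finally show ?thesis by (simp add: algebra_simps)
  qed
  have d: "((\<lambda>t. real n * p t i n) has_real_derivative real n * rhs t i n) (at t within {0..T})"
    if "0 \<le> t" "t \<le> T" for n t
    by (rule DERIV_cmult[OF deriv_p[OF that i]])
  note * = series_deriv[where f="\<lambda>n t. real n * p t i n" and f'="\<lambda>n t. real n * rhs t i n", OF T d b s
      sums_summable[OF p0_sums_n[OF i]] t]
  show "summable (\<lambda>n. real n * p t i n)" by (rule *(1))
  show "((\<lambda>t. mm i t) has_real_derivative (\<Sum>n. real n * rhs t i n)) (at t within {0..T})"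
    unfolding mm_def by (rule *(2))
qed

lemma aa_sums: "0 \<le> t \<Longrightarrow> j \<le> K \<Longrightarrow> (\<lambda>n. p t j n) sums aa j t"
  unfolding aa_def by (rule summable_sums, rule aa_series(1)[of t t]) auto

lemma mm_sums: "0 \<le> t \<Longrightarrow> j \<le> K \<Longrightarrow> (\<lambda>n. real n * p t j n) sums mm j t"
  unfolding mm_def by (rule summable_sums, rule mm_series(1)[of t t]) auto

lemma rhs_sums:
  assumes t: "0 \<le> t" and i: "i \<le> K"
  shows "(\<lambda>n. rhs t i n) sums gen lam mu K (\<lambda>j. aa j t) i"
proof -
  have "(\<lambda>n. Lop lam mu K (\<lambda>j. p t j n) i + (if 1 \<le> n then Sop mu K (\<lambda>j. p t j (n - 1)) i else 0))
     sums (Lop lam mu K (\<lambda>j. aa j t) i + Sop mu K (\<lambda>j. aa j t) i)"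
    by (intro sums_add Lop_sums[where v="\<lambda>n j. p t j n"] i
        Sop_shift_sums[where w="\<lambda>n j. p t j n"] aa_sums t)
  then show ?thesis by (simp add: rhs_def rhs_eq gen_def)
qed

lemma rhs_sums_n:
  assumes t: "0 \<le> t" and i: "i \<le> K"
  shows "(\<lambda>n. real n * rhs t i n) sums (gen lam mu K (\<lambda>j. mm j t) i + Sop mu K (\<lambda>j. aa j t) i)"
proof -
  have "(\<lambda>n. Lop lam mu K (\<lambda>j. real n * p t j n) i + real n * (if 1 \<le> n then Sop mu K (\<lambda>j. p t j (n - 1)) i else 0))
     sums (Lop lam mu K (\<lambda>j. mm j t) i + (Sop mu K (\<lambda>j. mm j t) i + Sop mu K (\<lambda>j. aa j t) i))"
    by (intro sums_add Lop_sums[where v="\<lambda>n j. real n * p t j n"] i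
        Sop_shift_sums_n[where w="\<lambda>n j. p t j n"] aa_sums mm_sums t)
  then show ?thesis by (simp add: rhs_def rhs_eq gen_def Lop_scale distrib_left add_ac)
qed

lemma aa_deriv:
  assumes t: "0 \<le> t" "t \<le> T" and i: "i \<le> K"
  shows "((\<lambda>t. aa i t) has_real_derivative gen lam mu K (\<lambda>j. aa j t) i) (at t within {0..T})"
  using aa_series(2)[OF t i] sums_unique[OF rhs_sums[OF t(1) i]] by simp

lemma mm_deriv:
  assumes t: "0 \<le> t" "t \<le> T" and i: "i \<le> K"
  shows "((\<lambda>t. mm i t) has_real_derivative gen lam mu K (\<lambda>j. mm j t) i + Sop mu K (\<lambda>j. aa j t) i) (at t within {0..T})"
  using mm_series(2)[OF t i] sums_unique[OF rhs_sums_n[OF t(1) i]] by simp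

lemma aa0: "i \<le> K \<Longrightarrow> aa i 0 = mm1k_pi (lam / mu) K i"
  unfolding aa_def using p0_sums by (simp add: sums_iff)

lemma mm0: "i \<le> K \<Longrightarrow> mm i 0 = 0"
  unfolding mm_def using p0_sums_n by (simp add: sums_iff)

end

lemma norm_const_pos:
  fixes r :: real assumes "r > 0" "r \<noteq> 1" shows "(1 - r) / (1 - r ^ (K + 1)) > 0"
proof (cases "r < 1")
  case True
  then have "r ^ Suc K < 1" using assms by (intro power_Suc_less_one) auto
  then show ?thesis using True by (intro divide_pos_pos) auto
next
  case False
  then have "r > 1" using assms by auto
  then have "1 < r ^ (K + 1)" by (intro one_less_power) auto
  then show ?thesis using \<open>r > 1\<close> by (intro divide_neg_neg) auto
qed

lemma gen_add: "gen lam mu K (\<lambda>j. x j + y j) i = gen lam mu K x i + gen lam mu K y i"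
  by (simp add: gen_def Lop_def Sop_def algebra_simps)
lemma gen_diff: "gen lam mu K (\<lambda>j. x j - y j) i = gen lam mu K x i - gen lam mu K y i"
  by (simp add: gen_def Lop_def Sop_def algebra_simps)
lemma gen_scale: "gen lam mu K (\<lambda>j. c * x j) i = c * gen lam mu K x i"
  by (simp add: gen_def Lop_def Sop_def algebra_simps)

lemma gen_sum: "(\<Sum>i\<le>K. gen lam mu K x i) = 0"
proof -
  have 1: "(\<Sum>i\<le>K. (if 1 \<le> i then lam * x (i - 1) else 0)) = lam * (\<Sum>i<K. x i)"
    using sum_shift_down[where K=K and f="\<lambda>j. lam * x j"] by (simp add: sum_distrib_left)
  have 2: "(\<Sum>i\<le>K. (if i + 1 \<le> K then mu * x (i + 1) else 0)) = mu * (\<Sum>i<K. x (Suc i))"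
    using sum_shift_up[where K=K and f="\<lambda>j. mu * x j"] by (simp add: sum_distrib_left)
  have 3: "(\<Sum>i\<le>K. (if i < K then lam else 0) * x i) = lam * (\<Sum>i<K. x i)"
  proof -
    have "(\<Sum>i\<le>K. (if i < K then lam else 0) * x i) = (\<Sum>i<K. lam * x i)"
      by (rule sum.mono_neutral_cong_right) auto
    then show ?thesis by (simp add: sum_distrib_left)
  qed
  have 4: "(\<Sum>i\<le>K. (if 0 < i then mu else 0) * x i) = mu * (\<Sum>i<K. x (Suc i))"
  proof -
    have "(\<Sum>i\<le>K. (if 0 < i then mu else 0) * x i) = (\<Sum>i<Suc K. (if 0 < i then mu else 0) * x i)"
      by (simp add: lessThan_Suc_atMost)
    also have "\<dots> = (\<Sum>i<K. mu * x (Suc i))" by (subst sum.lessThan_Suc_shift) simp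
    finally show ?thesis by (simp add: sum_distrib_left)
  qed
  have "(\<Sum>i\<le>K. gen lam mu K x i) = (\<Sum>i\<le>K. (if 1 \<le> i then lam * x (i - 1) else 0))
     + (\<Sum>i\<le>K. (if i + 1 \<le> K then mu * x (i + 1) else 0))
     - (\<Sum>i\<le>K. (if i < K then lam else 0) * x i) - (\<Sum>i\<le>K. (if 0 < i then mu else 0) * x i)"
    by (simp add: gen_def Lop_def Sop_def sum.distrib sum_subtractf algebra_simps)
  then show ?thesis using 1 2 3 4 by simp
qed

context mm1k begin

definition "rho = lam / mu"
definition "sp i = mm1k_pi rho K i"

lemma rho_pos: "rho > 0" using lam mu by (simp add: rho_def)

lemma pi_pos: "sp i > 0"
proof (cases "rho = 1")
  case True then show ?thesis by (simp add: sp_def mm1k_pi_def)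
next
  case False
  have "sp i = (1 - rho) / (1 - rho ^ (K + 1)) * rho ^ i" using False by (simp add: sp_def mm1k_pi_def)
  then show ?thesis using mult_pos_pos[OF norm_const_pos[OF rho_pos False, of K] zero_less_power[OF rho_pos, of i]]
    by simp
qed

lemma pi_sum: "(\<Sum>i\<le>K. sp i) = 1"
proof (cases "rho = 1")
  case True then show ?thesis by (simp add: sp_def mm1k_pi_def)
next
  case False
  have nz: "1 - rho ^ (K + 1) \<noteq> 0" using norm_const_pos[OF rho_pos False, of K] by auto
  have "(\<Sum>i\<le>K. sp i) = (1 - rho) / (1 - rho ^ (K + 1)) * (\<Sum>i\<le>K. rho ^ i)"
    using False by (simp add: sp_def mm1k_pi_def sum_distrib_left)
  moreover have "(\<Sum>i\<le>K. rho ^ i) = (1 - rho ^ Suc K) / (1 - rho)" using False by (simp add: sum_gp0)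
  ultimately show ?thesis using nz False by simp
qed

lemma pi_balance: "lam * sp i = mu * sp (Suc i)"
proof (cases "rho = 1")
  case True
  have "lam = mu" using mu True by (simp add: rho_def)
  moreover have "sp i = sp (Suc i)" using True by (simp add: sp_def mm1k_pi_def)
  ultimately show ?thesis by simp
next
  case False
  have "lam = mu * rho" using mu by (simp add: rho_def)
  then show ?thesis using False by (simp add: sp_def mm1k_pi_def)
qed

lemma gen_pi: "i \<le> K \<Longrightarrow> gen lam mu K sp i = 0"
  using pi_balance[of i] pi_balance[of "i - 1"]
  by (cases i) (auto simp: gen_def Lop_def Sop_def algebra_simps)

lemma aa_eq_pi: assumes T: "0 \<le> T" and i: "i \<le> K" shows "aa i T = sp i"
proof -
  define c2 where "c2 = 2 * lam + 2 * mu"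
  define D where "D t = (\<Sum>j\<le>K. (aa j t - sp j)\<^sup>2)" for t
  define f where "f t = exp (- c2 * t) * D t" for t
  have "f T \<le> f 0"
  proof (rule decr_Icc[OF T])
    fix t assume t: "0 \<le> t" "t \<le> T"
    let ?d = "\<lambda>j. aa j t - sp j"
    have dD: "(D has_real_derivative 2 * (\<Sum>j\<le>K. ?d j * gen lam mu K (\<lambda>j. aa j t) j)) (at t within {0..T})"
      unfolding D_def
      by (rule derivative_eq_intros aa_deriv[OF t] refl | simp add: sum_distrib_left mult_ac)+
    have g: "gen lam mu K (\<lambda>j. aa j t) j = gen lam mu K ?d j" if "j \<le> K" for j
      using gen_diff[where x="\<lambda>j. aa j t" and y=sp, of lam mu K j] gen_pi[OF that] by simp
    have "2 * (\<Sum>j\<le>K. ?d j * gen lam mu K (\<lambda>j. aa j t) j) = 2 * (\<Sum>j\<le>K. ?d j * (Lop lam mu K ?d j + Sop mu K ?d j))"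
      using g by (simp add: gen_def)
    also have "\<dots> \<le> (2*lam + mu) * D t + mu * D t"
      using energy[where lam=lam and mu=mu and K=K and v="?d" and w="?d"] lam mu by (simp add: D_def)
    finally have le: "2 * (\<Sum>j\<le>K. ?d j * gen lam mu K (\<lambda>j. aa j t) j) \<le> c2 * D t"
      by (simp add: c2_def algebra_simps)
    show "(f has_real_derivative exp (- c2 * t) * (2 * (\<Sum>j\<le>K. ?d j * gen lam mu K (\<lambda>j. aa j t) j) - c2 * D t)) (at t within {0..T})"
      unfolding f_def
      by (rule derivative_eq_intros dD refl | simp add: algebra_simps)+
    show "exp (- c2 * t) * (2 * (\<Sum>j\<le>K. ?d j * gen lam mu K (\<lambda>j. aa j t) j) - c2 * D t) \<le> 0"
      using le by (intro mult_nonneg_nonpos) auto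
  qed
  moreover have "D 0 = 0" unfolding D_def by (simp add: aa0 sp_def rho_def)
  moreover have "D T \<ge> 0" unfolding D_def by (auto intro: sum_nonneg)
  ultimately have "D T = 0" unfolding f_def by (simp add: mult_le_0_iff)
  then have "(aa i T - sp i)\<^sup>2 = 0"
    unfolding D_def using i by (subst (asm) sum_nonneg_eq_0_iff) auto
  then show ?thesis by simp
qed

end

lemma gen_flux:
  assumes pos: "\<And>i. s i > 0" and bal: "\<And>i. lam * s i = mu * s (Suc i)" and i: "i \<le> K"
  shows "gen lam mu K z i = (if i < K then lam * s i * (z (Suc i) / s (Suc i) - z i / s i) else 0)
     - (if 1 \<le> i then lam * s (i - 1) * (z i / s i - z (i - 1) / s (i - 1)) else 0)"
proof -
  have f1: "mu * z (Suc j) - lam * z j = lam * s j * (z (Suc j) / s (Suc j) - z j / s j)" for j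
  proof -
    have "lam * s j * (z (Suc j) / s (Suc j)) = mu * z (Suc j)"
      using bal[of j] pos[of "Suc j"] by (simp add: field_simps)
    moreover have "lam * s j * (z j / s j) = lam * z j" using pos[of j] by simp
    ultimately show ?thesis by (simp add: algebra_simps)
  qed
  show ?thesis
  proof (cases i)
    case 0
    then show ?thesis using f1[of 0] by (simp add: gen_def Lop_def Sop_def algebra_simps)
  next
    case (Suc k)
    then show ?thesis using f1[of i] f1[of k] i by (auto simp: gen_def Lop_def Sop_def algebra_simps)
  qed
qed

lemma weighted_identity:
  assumes pos: "\<And>i. s i > 0" and bal: "\<And>i. lam * s i = mu * s (Suc i)"
  shows "(\<Sum>i\<le>K. (z i / s i) * gen lam mu K z i)
     = - (\<Sum>k<K. lam * s k * (z (Suc k) / s (Suc k) - z k / s k)\<^sup>2)"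
proof -
  define u where "u i = z i / s i" for i
  define J where "J k = lam * s k * (u (Suc k) - u k)" for k
  have g: "gen lam mu K z i = (if i < K then J i else 0) - (if 1 \<le> i then J (i - 1) else 0)" if "i \<le> K" for i
    using gen_flux[where s=s and lam=lam and mu=mu and z=z, OF pos bal that] that unfolding J_def u_def by (cases i) auto
  have "(\<Sum>i\<le>K. u i * gen lam mu K z i) = (\<Sum>i\<le>K. u i * (if i < K then J i else 0)) - (\<Sum>i\<le>K. (if 1 \<le> i then u (Suc (i - 1)) * J (i - 1) else 0))"
  proof -
    have "u i * gen lam mu K z i = u i * (if i < K then J i else 0) - (if 1 \<le> i then u (Suc (i - 1)) * J (i - 1) else 0)"
      if "i \<le> K" for i
      using that by (cases i) (auto simp: g algebra_simps)
    then have "(\<Sum>i\<le>K. u i * gen lam mu K z i) = (\<Sum>i\<le>K. u i * (if i < K then J i else 0) - (if 1 \<le> i then u (Suc (i - 1)) * J (i - 1) else 0))"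
      by (intro sum.cong) auto
    then show ?thesis by (simp only: sum_subtractf)
  qed
  also have "(\<Sum>i\<le>K. u i * (if i < K then J i else 0)) = (\<Sum>i<K. u i * J i)"
    by (rule sum.mono_neutral_cong_right) auto
  also have "(\<Sum>i\<le>K. (if 1 \<le> i then u (Suc (i - 1)) * J (i - 1) else 0)) = (\<Sum>i<K. u (Suc i) * J i)"
    by (rule sum_shift_down)
  also have "(\<Sum>i<K. u i * J i) - (\<Sum>i<K. u (Suc i) * J i) = - (\<Sum>k<K. lam * s k * (u (Suc k) - u k)\<^sup>2)"
    by (simp add: J_def sum_subtractf[symmetric] sum_negf[symmetric] power2_eq_square algebra_simps)
  finally show ?thesis by (simp add: u_def)
qed

lemma sq_diff_bound:
  fixes u :: "nat \<Rightarrow> real"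
  assumes "i \<le> K" "j \<le> K"
  shows "(u j - u i)\<^sup>2 \<le> real K * (\<Sum>k<K. (u (Suc k) - u k)\<^sup>2)"
proof -
  have *: "(u j - u i)\<^sup>2 \<le> real K * (\<Sum>k<K. (u (Suc k) - u k)\<^sup>2)" if ij: "i \<le> j" "j \<le> K" for i j
  proof -
    have "u j - u i = (\<Sum>k=i..<j. u (Suc k) - u k)" using sum_Suc_diff'[OF ij(1), of u] by simp
    then have "(u j - u i)\<^sup>2 \<le> (\<Sum>k=i..<j. (u (Suc k) - u k)\<^sup>2) * card {i..<j}"
      using sum_squared_le_sum_of_squares[of "\<lambda>k. u (Suc k) - u k" "{i..<j}"] by simp
    also have "\<dots> \<le> (\<Sum>k<K. (u (Suc k) - u k)\<^sup>2) * real K"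
    proof (rule mult_mono)
      show "(\<Sum>k=i..<j. (u (Suc k) - u k)\<^sup>2) \<le> (\<Sum>k<K. (u (Suc k) - u k)\<^sup>2)"
        by (rule sum_mono2) (use ij in auto)
      show "real (card {i..<j}) \<le> real K" using ij by simp
    qed (auto intro: sum_nonneg)
    finally show ?thesis by (simp add: mult_ac)
  qed
  show ?thesis
  proof (cases "i \<le> j")
    case True then show ?thesis using *[of i j] assms by simp
  next
    case False
    then have "(u i - u j)\<^sup>2 \<le> real K * (\<Sum>k<K. (u (Suc k) - u k)\<^sup>2)" using *[of j i] assms by simp
    then show ?thesis by (simp add: power2_commute)
  qed
qed

lemma poincare:
  fixes u s :: "nat \<Rightarrow> real"
  assumes nn: "\<And>i. s i \<ge> 0" and s1: "(\<Sum>i\<le>K. s i) = 1" and m0: "(\<Sum>i\<le>K. s i * u i) = 0"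
  shows "(\<Sum>i\<le>K. s i * (u i)\<^sup>2) \<le> real K * (\<Sum>k<K. (u (Suc k) - u k)\<^sup>2)"
proof -
  define R where "R = real K * (\<Sum>k<K. (u (Suc k) - u k)\<^sup>2)"
  have R0: "R \<ge> 0" unfolding R_def by (intro mult_nonneg_nonneg sum_nonneg) auto
  have "(\<Sum>i\<le>K. \<Sum>j\<le>K. s i * s j * (u i - u j)\<^sup>2)
      = (\<Sum>i\<le>K. \<Sum>j\<le>K. (s i * (u i)\<^sup>2) * s j + s i * (s j * (u j)\<^sup>2) - 2 * ((s i * u i) * (s j * u j)))"
    by (intro sum.cong refl) (simp add: power2_eq_square algebra_simps)
  also have "\<dots> = (\<Sum>i\<le>K. s i * (u i)\<^sup>2) * (\<Sum>j\<le>K. s j) + (\<Sum>i\<le>K. s i) * (\<Sum>j\<le>K. s j * (u j)\<^sup>2)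
      - 2 * ((\<Sum>i\<le>K. s i * u i) * (\<Sum>j\<le>K. s j * u j))"
  proof -
    have a: "(\<Sum>i\<le>K. \<Sum>j\<le>K. (s i * (u i)\<^sup>2) * s j) = (\<Sum>i\<le>K. s i * (u i)\<^sup>2) * (\<Sum>j\<le>K. s j)"
      by (simp add: sum_product)
    have b: "(\<Sum>i\<le>K. \<Sum>j\<le>K. s i * (s j * (u j)\<^sup>2)) = (\<Sum>i\<le>K. s i) * (\<Sum>j\<le>K. s j * (u j)\<^sup>2)"
      by (simp add: sum_product)
    have c: "(\<Sum>i\<le>K. \<Sum>j\<le>K. 2 * ((s i * u i) * (s j * u j))) = 2 * ((\<Sum>i\<le>K. s i * u i) * (\<Sum>j\<le>K. s j * u j))"
      by (simp only: sum_product sum_distrib_left[symmetric])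
    show ?thesis unfolding a[symmetric] b[symmetric] c[symmetric]
      by (simp only: sum.distrib sum_subtractf)
  qed
  also have "\<dots> = 2 * (\<Sum>i\<le>K. s i * (u i)\<^sup>2)" using s1 m0 by simp
  finally have eq: "2 * (\<Sum>i\<le>K. s i * (u i)\<^sup>2) = (\<Sum>i\<le>K. \<Sum>j\<le>K. s i * s j * (u i - u j)\<^sup>2)" by simp
  also have "\<dots> \<le> (\<Sum>i\<le>K. \<Sum>j\<le>K. s i * s j * R)"
    by (intro sum_mono mult_left_mono) (use nn in \<open>auto simp: R_def intro: sq_diff_bound\<close>)
  also have "\<dots> = R" using s1 by (simp add: sum_distrib_left[symmetric] sum_distrib_right[symmetric])
  finally show ?thesis using R0 unfolding R_def by linarith
qed

lemma Sop_cong: "(\<And>j. j \<le> K \<Longrightarrow> x j = y j) \<Longrightarrow> Sop mu K x i = Sop mu K y i"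
  by (simp add: Sop_def)

lemma exp_decay: "g > 0 \<Longrightarrow> ((\<lambda>t. exp (- g * t)) \<longlongrightarrow> (0::real)) at_top"
proof -
  assume g: "g > 0"
  have "LIM t at_top. (- g) * t :> at_bot"
    by (rule filterlim_tendsto_neg_mult_at_bot[OF tendsto_const _ filterlim_ident]) (use g in auto)
  then show ?thesis by (rule filterlim_compose[OF exp_at_bot])
qed

context mm1k begin

definition "theta = mu * (1 - sp 0)"

lemma sp_le_sum: "i \<le> K \<Longrightarrow> sp i \<le> 1"
  using member_le_sum[of i "{..K}" sp] pi_pos pi_sum by (simp add: less_imp_le)

lemma cov_limit_general:
  assumes hgen: "\<And>i. i \<le> K \<Longrightarrow> gen lam mu K h i = theta * sp i - Sop mu K sp i"
  shows "((\<lambda>t. mm1k_cov K p t) \<longlongrightarrow> (\<Sum>i\<le>K. real i * h i) - (\<Sum>i\<le>K. h i) * (\<Sum>i\<le>K. real i * sp i)) at_top"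
proof -
  define c0 where "c0 = - (\<Sum>j\<le>K. h j)"
  define z where "z i t = mm i t - theta * t * sp i - h i - c0 * sp i" for i t
  define EQs where "EQs = (\<Sum>i\<le>K. real i * sp i)"
  define L where "L = (\<Sum>i\<le>K. real i * h i) - (\<Sum>i\<le>K. h i) * EQs"
  have zderiv: "((\<lambda>t. z i t) has_real_derivative gen lam mu K (\<lambda>j. z j t) i) (at t within {0..T})"
    if t: "0 \<le> t" "t \<le> T" and i: "i \<le> K" for i t T
  proof -
    have m: "((\<lambda>t. mm i t) has_real_derivative gen lam mu K (\<lambda>j. mm j t) i + Sop mu K sp i) (at t within {0..T})"
      using mm_deriv[OF t i] Sop_cong[of K "\<lambda>j. aa j t" sp mu i] aa_eq_pi[OF t(1)] by simp
    have "((\<lambda>t. z i t) has_real_derivative gen lam mu K (\<lambda>j. mm j t) i + Sop mu K sp i - theta * sp i) (at t within {0..T})"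
      unfolding z_def by (rule derivative_eq_intros m refl | simp)+
    moreover have "gen lam mu K (\<lambda>j. z j t) i = gen lam mu K (\<lambda>j. mm j t) i + Sop mu K sp i - theta * sp i"
    proof -
      have "gen lam mu K (\<lambda>j. z j t) i = gen lam mu K (\<lambda>j. mm j t) i - (theta * t) * gen lam mu K sp i
         - gen lam mu K h i - c0 * gen lam mu K sp i"
        unfolding z_def by (simp only: gen_diff gen_scale)
      then show ?thesis using hgen[OF i] gen_pi[OF i] by simp
    qed
    ultimately show ?thesis by simp
  qed
  have zsum: "(\<Sum>i\<le>K. z i t) = 0" if t: "0 \<le> t" for t
  proof -
    have d: "((\<lambda>t. \<Sum>i\<le>K. z i t) has_real_derivative 0) (at s within {0..t})" if "0 \<le> s" "s \<le> t" for s
    proof -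
      have "((\<lambda>t. \<Sum>i\<le>K. z i t) has_real_derivative (\<Sum>i\<le>K. gen lam mu K (\<lambda>j. z j s) i)) (at s within {0..t})"
        by (rule DERIV_sum) (use zderiv[OF that] in auto)
      then show ?thesis by (simp add: gen_sum)
    qed
    have d': "((\<lambda>t. - (\<Sum>i\<le>K. z i t)) has_real_derivative - 0) (at s within {0..t})" if "0 \<le> s" "s \<le> t" for s
      by (rule DERIV_minus[OF d[OF that]])
    have 1: "(\<Sum>i\<le>K. z i t) \<le> (\<Sum>i\<le>K. z i 0)" by (rule decr_Icc[OF t d]) auto
    have 2: "- (\<Sum>i\<le>K. z i t) \<le> - (\<Sum>i\<le>K. z i 0)" by (rule decr_Icc[OF t d']) auto
    have 3: "(\<Sum>i\<le>K. z i 0) = 0"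
      by (simp add: z_def mm0 sum_subtractf sum_distrib_left[symmetric] pi_sum c0_def)
    show ?thesis using 1 2 3 by linarith
  qed
  define pm where "pm = Min (sp ` {..K})"
  have pm_pos: "pm > 0" unfolding pm_def using pi_pos by (subst Min_gr_iff) auto
  have pm_le: "pm \<le> sp k" if "k \<le> K" for k unfolding pm_def using that by (intro Min_le) auto
  define gam where "gam = 2 * lam * pm / real K"
  have gam_pos: "gam > 0" unfolding gam_def using lam pm_pos K by auto
  define W where "W t = (\<Sum>i\<le>K. (z i t)\<^sup>2 / sp i)" for t
  have W_nonneg: "W t \<ge> 0" for t unfolding W_def by (intro sum_nonneg divide_nonneg_pos) (auto simp: pi_pos)
  have Wdecay: "W t \<le> exp (- gam * t) * W 0" if t: "0 \<le> t" for t
  proof -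
    define f where "f s = exp (gam * s) * W s" for s
    have "f t \<le> f 0"
    proof (rule decr_Icc[OF t])
      fix s assume s: "0 \<le> s" "s \<le> t"
      define u where "u i = z i s / sp i" for i
      define Df where "Df = (\<Sum>k<K. lam * sp k * (u (Suc k) - u k)\<^sup>2)"
      have dW: "(W has_real_derivative 2 * (\<Sum>i\<le>K. (z i s / sp i) * gen lam mu K (\<lambda>j. z j s) i)) (at s within {0..t})"
      proof -
        have tm: "((\<lambda>t. (z i t)\<^sup>2 / sp i) has_real_derivative 2 * ((z i s / sp i) * gen lam mu K (\<lambda>j. z j s) i)) (at s within {0..t})"
          if i: "i \<le> K" for i
        proof -
          have "((\<lambda>t. (z i t)\<^sup>2 / sp i) has_real_derivative of_nat 2 * (gen lam mu K (\<lambda>j. z j s) i * z i s ^ (2 - Suc 0)) / sp i) (at s within {0..t})"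
            by (rule DERIV_cdivide[OF DERIV_power[OF zderiv[OF s i]]])
          moreover have "of_nat 2 * (gen lam mu K (\<lambda>j. z j s) i * z i s ^ (2 - Suc 0)) / sp i = 2 * ((z i s / sp i) * gen lam mu K (\<lambda>j. z j s) i)"
            by (simp add: mult_ac)
          ultimately show ?thesis by metis
        qed
        have "(W has_real_derivative (\<Sum>i\<le>K. 2 * ((z i s / sp i) * gen lam mu K (\<lambda>j. z j s) i))) (at s within {0..t})"
          unfolding W_def by (rule DERIV_sum) (use tm in auto)
        then show ?thesis by (simp add: sum_distrib_left)
      qed
      have dW2: "2 * (\<Sum>i\<le>K. (z i s / sp i) * gen lam mu K (\<lambda>j. z j s) i) = - 2 * Df"
        unfolding Df_def u_def using weighted_identity[where s=sp and z="\<lambda>j. z j s" and K=K, OF pi_pos pi_balance] by simp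
      have Wu: "W s = (\<Sum>i\<le>K. sp i * (u i)\<^sup>2)"
        unfolding W_def u_def using pi_pos by (intro sum.cong refl) (simp add: power2_eq_square field_simps)
      have P: "W s \<le> real K * (\<Sum>k<K. (u (Suc k) - u k)\<^sup>2)"
        unfolding Wu
      proof (rule poincare)
        have "(\<Sum>i\<le>K. sp i * u i) = (\<Sum>i\<le>K. z i s)"
          using pi_pos by (intro sum.cong refl) (simp add: u_def less_imp_neq[symmetric])
        then show "(\<Sum>i\<le>K. sp i * u i) = 0" using zsum[OF s(1)] by simp
      qed (use pi_pos pi_sum less_imp_le in auto)
      have "lam * pm * (\<Sum>k<K. (u (Suc k) - u k)\<^sup>2) = (\<Sum>k<K. lam * pm * (u (Suc k) - u k)\<^sup>2)"
        by (simp add: sum_distrib_left)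
      also have "\<dots> \<le> Df" unfolding Df_def
        using pm_le lam by (intro sum_mono mult_right_mono mult_left_mono) auto
      finally have "lam * pm * (\<Sum>k<K. (u (Suc k) - u k)\<^sup>2) \<le> Df" .
      then have Dle: "lam * pm * (\<Sum>k<K. (u (Suc k) - u k)\<^sup>2) \<le> Df" .
      have "lam * pm * W s \<le> lam * pm * (real K * (\<Sum>k<K. (u (Suc k) - u k)\<^sup>2))"
        by (rule mult_left_mono[OF P]) (use lam pm_pos in auto)
      also have "\<dots> = real K * (lam * pm * (\<Sum>k<K. (u (Suc k) - u k)\<^sup>2))" by simp
      also have "\<dots> \<le> real K * Df" by (rule mult_left_mono[OF Dle]) simp
      finally have "2 * (lam * pm * W s) / real K \<le> 2 * (real K * Df) / real K"
        by (intro divide_right_mono mult_left_mono) auto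
      then have "gam * W s \<le> 2 * Df" using K unfolding gam_def by (simp add: field_simps)
      show "(f has_real_derivative exp (gam * s) * (gam * W s - 2 * Df)) (at s within {0..t})"
      proof -
        have dW': "(W has_real_derivative - 2 * Df) (at s within {0..t})" using dW unfolding dW2 .
        show ?thesis unfolding f_def
          by (rule derivative_eq_intros dW' refl | simp add: algebra_simps)+
      qed
      show "exp (gam * s) * (gam * W s - 2 * Df) \<le> 0"
        using \<open>gam * W s \<le> 2 * Df\<close> by (intro mult_nonneg_nonpos) auto
    qed
    then have "exp (gam * t) * W t \<le> W 0" by (simp add: f_def)
    then show ?thesis by (simp add: exp_minus field_simps)
  qed
  have zlim: "((\<lambda>t. z i t) \<longlongrightarrow> 0) at_top" if i: "i \<le> K" for i
  proof (rule Lim_null_comparison)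
    show "((\<lambda>t. sqrt (sp i * W 0) * exp (- (gam / 2) * t)) \<longlongrightarrow> 0) at_top"
      using tendsto_mult_right_zero[OF exp_decay[of "gam / 2"]] gam_pos by simp
    show "\<forall>\<^sub>F t in at_top. norm (z i t) \<le> sqrt (sp i * W 0) * exp (- (gam / 2) * t)"
      using eventually_ge_at_top[of 0]
    proof eventually_elim
      case (elim t)
      have "(z i t)\<^sup>2 / sp i \<le> W t" unfolding W_def
        by (rule member_le_sum[where f="\<lambda>i. (z i t)\<^sup>2 / sp i"]) (use i pi_pos in \<open>auto intro: divide_nonneg_pos\<close>)
      then have "(z i t)\<^sup>2 \<le> sp i * W t" using pi_pos[of i] by (simp add: field_simps)
      also have "\<dots> \<le> sp i * (exp (- gam * t) * W 0)"
        using Wdecay[OF elim] pi_pos[of i] by (intro mult_left_mono) auto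
      also have "\<dots> = (sqrt (sp i * W 0) * exp (- (gam / 2) * t))\<^sup>2"
      proof -
        have 1: "sqrt (sp i * W 0) * sqrt (sp i * W 0) = sp i * W 0"
          using pi_pos[of i] W_nonneg[of 0] by simp
        have 2: "exp (- (gam / 2) * t) * exp (- (gam / 2) * t) = exp (- gam * t)"
          by (simp add: exp_add[symmetric])
        have "(sqrt (sp i * W 0) * exp (- (gam / 2) * t))\<^sup>2
           = (sqrt (sp i * W 0) * sqrt (sp i * W 0)) * (exp (- (gam / 2) * t) * exp (- (gam / 2) * t))"
          by (simp only: power2_eq_square mult_ac)
        then show ?thesis unfolding 1 2 by (simp add: mult_ac)
      qed
      finally have sq: "\<bar>z i t\<bar>\<^sup>2 \<le> (sqrt (sp i * W 0) * exp (- (gam / 2) * t))\<^sup>2" by simp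
      have "\<bar>z i t\<bar> \<le> sqrt (sp i * W 0) * exp (- (gam / 2) * t)"
        by (rule power2_le_imp_le[OF sq]) (use pi_pos[of i] W_nonneg[of 0] in auto)
      then show ?case by simp
    qed
  qed
  have covEq: "mm1k_cov K p t = (\<Sum>i\<le>K. real i * z i t) - (\<Sum>i\<le>K. z i t) * EQs + L" if t: "0 \<le> t" for t
  proof -
    have EQ: "mm1k_EQ K p t = EQs"
    proof -
      have "(\<lambda>n. \<Sum>i\<le>K. real i * p t i n) sums (\<Sum>i\<le>K. real i * aa i t)"
        by (intro sums_sum sums_mult aa_sums t) auto
      then show ?thesis unfolding mm1k_EQ_def EQs_def using aa_eq_pi[OF t] by (simp add: sums_iff)
    qed
    have ED: "mm1k_ED K p t = (\<Sum>i\<le>K. mm i t)"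
    proof -
      have "(\<lambda>n. \<Sum>i\<le>K. real n * p t i n) sums (\<Sum>i\<le>K. mm i t)"
        by (intro sums_sum mm_sums t) auto
      then show ?thesis unfolding mm1k_ED_def by (simp add: sums_iff)
    qed
    have EDQ: "mm1k_EDQ K p t = (\<Sum>i\<le>K. real i * mm i t)"
    proof -
      have "(\<lambda>n. \<Sum>i\<le>K. real i * (real n * p t i n)) sums (\<Sum>i\<le>K. real i * mm i t)"
        by (intro sums_sum sums_mult mm_sums t) auto
      then show ?thesis unfolding mm1k_EDQ_def by (simp add: sums_iff mult_ac)
    qed
    define kap where "kap = theta * t + c0"
    have mmz: "mm i t = z i t + kap * sp i + h i" for i by (simp add: z_def kap_def algebra_simps)
    have e1: "(\<Sum>i\<le>K. real i * mm i t) = (\<Sum>i\<le>K. real i * z i t) + kap * EQs + (\<Sum>i\<le>K. real i * h i)"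
      by (simp add: mmz EQs_def algebra_simps sum.distrib sum_distrib_left)
    have e2: "(\<Sum>i\<le>K. mm i t) = (\<Sum>i\<le>K. z i t) + kap + (\<Sum>i\<le>K. h i)"
      by (simp add: mmz sum.distrib sum_distrib_left[symmetric] pi_sum)
    show ?thesis unfolding mm1k_cov_def EQ ED EDQ e1 e2 L_def by (simp add: algebra_simps)
  qed
  have "((\<lambda>t. (\<Sum>i\<le>K. real i * z i t) - (\<Sum>i\<le>K. z i t) * EQs + L) \<longlongrightarrow>
      (\<Sum>i\<le>K. real i * 0) - (\<Sum>i\<le>K. (0::real)) * EQs + L) at_top"
    by (intro tendsto_intros zlim) auto
  then have "((\<lambda>t. (\<Sum>i\<le>K. real i * z i t) - (\<Sum>i\<le>K. z i t) * EQs + L) \<longlongrightarrow> L) at_top" by simp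
  then have "((\<lambda>t. mm1k_cov K p t) \<longlongrightarrow> L) at_top"
  proof (rule Lim_transform_eventually)
    show "\<forall>\<^sub>F x in at_top. (\<Sum>i\<le>K. real i * z i x) - (\<Sum>i\<le>K. z i x) * EQs + L = mm1k_cov K p x"
      using eventually_ge_at_top[of "0::real"] by eventually_elim (simp add: covEq)
  qed
  then show ?thesis unfolding L_def EQs_def .
qed

end

lemma S0_closed: "((r::real) - 1) * (\<Sum>i\<le>K. r ^ i) = r ^ (K + 1) - 1"
  by (induction K) (auto simp: algebra_simps)

lemma S1_closed: "((r::real) - 1)\<^sup>2 * (\<Sum>i\<le>K. real i * r ^ i) = real K * r ^ (K + 2) - (real K + 1) * r ^ (K + 1) + r"
proof (induction K)
  case 0 then show ?case by (simp add: power2_eq_square algebra_simps)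
next
  case (Suc K)
  have "(r - 1)\<^sup>2 * (\<Sum>i\<le>Suc K. real i * r ^ i) = (r - 1)\<^sup>2 * (\<Sum>i\<le>K. real i * r ^ i) + (r - 1)\<^sup>2 * (real (Suc K) * r ^ Suc K)"
    by (simp add: algebra_simps)
  also have "\<dots> = real K * r ^ (K + 2) - (real K + 1) * r ^ (K + 1) + r + (r - 1)\<^sup>2 * (real (Suc K) * r ^ Suc K)"
    using Suc.IH by simp
  also have "\<dots> = real (Suc K) * r ^ (Suc K + 2) - (real (Suc K) + 1) * r ^ (Suc K + 1) + r"
    by (simp add: power2_eq_square algebra_simps)
  finally show ?case .
qed

lemma S2_closed: "(1 - (r::real)) ^ 3 * (\<Sum>i\<le>K. (real i)\<^sup>2 * r ^ i)
   = r * (1 + r - (real K + 1)\<^sup>2 * r ^ K + (2 * (real K)\<^sup>2 + 2 * real K - 1) * r ^ (K + 1) - (real K)\<^sup>2 * r ^ (K + 2))"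
proof (induction K)
  case 0 then show ?case by (simp add: power2_eq_square power3_eq_cube algebra_simps)
next
  case (Suc K)
  have "(1 - r) ^ 3 * (\<Sum>i\<le>Suc K. (real i)\<^sup>2 * r ^ i) = (1 - r) ^ 3 * (\<Sum>i\<le>K. (real i)\<^sup>2 * r ^ i) + (1 - r) ^ 3 * ((real (Suc K))\<^sup>2 * r ^ Suc K)"
    by (simp add: algebra_simps)
  also have "\<dots> = r * (1 + r - (real K + 1)\<^sup>2 * r ^ K + (2 * (real K)\<^sup>2 + 2 * real K - 1) * r ^ (K + 1) - (real K)\<^sup>2 * r ^ (K + 2))
      + (1 - r) ^ 3 * ((real (Suc K))\<^sup>2 * r ^ Suc K)"
    using Suc.IH by simp
  also have "\<dots> = r * (1 + r - (real (Suc K) + 1)\<^sup>2 * r ^ Suc K + (2 * (real (Suc K))\<^sup>2 + 2 * real (Suc K) - 1) * r ^ (Suc K + 1) - (real (Suc K))\<^sup>2 * r ^ (Suc K + 2))"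
    by (simp add: power2_eq_square power3_eq_cube algebra_simps)
  finally show ?case .
qed

lemma N1_closed: "(\<Sum>i\<le>K. real i) = real K * (real K + 1) / 2"
  by (induction K) (auto simp: field_simps)

lemma P2_closed: "(\<Sum>i\<le>K. real i * (real i + 1)) = real K * (real K + 1) * (real K + 2) / 3"
  by (induction K) (auto simp: field_simps)

lemma P3_closed: "(\<Sum>i\<le>K. real i * (real i * (real i + 1))) = real K * (real K + 1) * (real K + 2) * (3 * real K + 1) / 12"
  by (induction K) (auto simp: field_simps)

lemma final_alg:
  fixes r x k S0 S1 S2 :: real
  assumes r1: "r \<noteq> 1" and rx: "1 - r * x \<noteq> 0"
    and s0: "(r - 1) * S0 = r * x - 1"
    and s1: "(r - 1)\<^sup>2 * S1 = k * (r * r * x) - (k + 1) * (r * x) + r"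
    and s2: "(1 - r) ^ 3 * S2 = r * (1 + r - (k + 1)\<^sup>2 * x + (2 * k\<^sup>2 + 2 * k - 1) * (r * x) - k\<^sup>2 * (r * r * x))"
  shows "(- (r * x) / (1 - r * x)\<^sup>2) * ((r - 1) * S2 - S1 + k * (k + 1) / 2)
     - (- (r * x) / (1 - r * x)\<^sup>2) * ((r - 1) * S1 - S0 + (k + 1)) * ((1 - r) / (1 - r * x) * S1)
   = r * x * (k\<^sup>2 * (r - 1)\<^sup>2 * (1 + 3 * (r * x)) - 2 * r * (x - 1) * (-2 + r + r * r * x)
        + k * (r - 1) * (-1 + 3 * r - 7 * (r * x) + 5 * (r * r * x))) / (2 * (r - 1)\<^sup>2 * (r * x - 1) ^ 3)"
proof -
  define P0 where "P0 = r * x - 1"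
  define P1 where "P1 = k * (r * r * x) - (k + 1) * (r * x) + r"
  define P2 where "P2 = r * (1 + r - (k + 1)\<^sup>2 * x + (2 * k\<^sup>2 + 2 * k - 1) * (r * x) - k\<^sup>2 * (r * r * x))"
  define q where "q = r * x - 1"
  define N where "N = k\<^sup>2 * (r - 1)\<^sup>2 * (1 + 3 * (r * x)) - 2 * r * (x - 1) * (-2 + r + r * r * x)
        + k * (r - 1) * (-1 + 3 * r - 7 * (r * x) + 5 * (r * r * x))"
  define X where "X = -2 * P2 - 2 * P1 + k * (k + 1) * (r - 1)\<^sup>2"
  define Y where "Y = P1 - P0 + (k + 1) * (r - 1)"
  have d: "r - 1 \<noteq> 0" using r1 by auto
  have q: "q \<noteq> 0" using rx by (auto simp: q_def)
  have e0: "S0 = P0 / (r - 1)" using s0 d by (simp add: P0_def field_simps)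
  have e1: "S1 = P1 / (r - 1)\<^sup>2" using s1 d by (simp add: P1_def field_simps)
  have e2: "S2 = - P2 / (r - 1) ^ 3"
  proof -
    have "(1 - r) ^ 3 = - ((r - 1) ^ 3)" by (simp add: power3_eq_cube algebra_simps)
    then show ?thesis using s2 d by (simp add: P2_def field_simps)
  qed
  have A: "(r - 1) * S2 - S1 + k * (k + 1) / 2 = X / (2 * (r - 1)\<^sup>2)"
  proof -
    have d2: "(r - 1)\<^sup>2 \<noteq> 0" using d by simp
    have "(r - 1) * S2 = - P2 / (r - 1)\<^sup>2" unfolding e2 using d by (simp add: power2_eq_square power3_eq_cube)
    then show ?thesis unfolding e1 X_def using d2 by (simp add: field_simps)
  qed
  have B: "(r - 1) * S1 - S0 + (k + 1) = Y / (r - 1)"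
  proof -
    have "(r - 1) * S1 = P1 / (r - 1)" unfolding e1 using d by (simp add: power2_eq_square)
    then show ?thesis unfolding e0 Y_def using d by (simp add: field_simps)
  qed
  have aS: "(1 - r) / (1 - r * x) * S1 = P1 / (q * (r - 1))"
  proof -
    have h1: "1 - r * x = - q" and h2: "1 - r = - (r - 1)" by (auto simp: q_def)
    have g: "(- dd) / (- qq) * (P / dd\<^sup>2) = P / (qq * dd)" if "dd \<noteq> 0" "qq \<noteq> 0" for dd qq P :: real
      using that by (simp add: power2_eq_square field_simps)
    show ?thesis unfolding e1 h1 h2 by (rule g[OF d q])
  qed
  have C: "- (r * x) / (1 - r * x)\<^sup>2 = - (r * x) / q\<^sup>2"
    by (simp add: q_def power2_eq_square algebra_simps)
  have AB: "X / (2 * (r - 1)\<^sup>2) - Y / (r - 1) * (P1 / (q * (r - 1))) = (q * X - 2 * Y * P1) / (2 * (r - 1)\<^sup>2 * q)"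
  proof -
    have g: "X / (2 * dd\<^sup>2) - Y / dd * (P1 / (qq * dd)) = (qq * X - 2 * Y * P1) / (2 * dd\<^sup>2 * qq)"
      if "dd \<noteq> 0" "qq \<noteq> 0" for dd qq :: real
      using that by (simp add: field_simps power2_eq_square)
    show ?thesis by (rule g[OF d q])
  qed
  have poly: "- (q * X - 2 * Y * P1) = N"
    unfolding X_def Y_def P0_def P1_def P2_def q_def N_def by algebra
  have "(- (r * x) / (1 - r * x)\<^sup>2) * ((r - 1) * S2 - S1 + k * (k + 1) / 2)
     - (- (r * x) / (1 - r * x)\<^sup>2) * ((r - 1) * S1 - S0 + (k + 1)) * ((1 - r) / (1 - r * x) * S1)
     = (- (r * x) / q\<^sup>2) * (X / (2 * (r - 1)\<^sup>2) - Y / (r - 1) * (P1 / (q * (r - 1))))"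
    unfolding A B aS C by (simp add: algebra_simps)
  also have "\<dots> = r * x * (- (q * X - 2 * Y * P1)) / (2 * (r - 1)\<^sup>2 * q ^ 3)"
  proof -
    have g: "(- (r * x) / qq\<^sup>2) * ((qq * X - 2 * Y * P1) / (2 * dd\<^sup>2 * qq)) = r * x * (- (qq * X - 2 * Y * P1)) / (2 * dd\<^sup>2 * qq ^ 3)"
      if "dd \<noteq> 0" "qq \<noteq> 0" for dd qq :: real
      using that by (simp add: field_simps power2_eq_square power3_eq_cube)
    show ?thesis unfolding AB by (rule g[OF d q])
  qed
  also have "\<dots> = r * x * N / (2 * (r - 1)\<^sup>2 * (r * x - 1) ^ 3)" by (subst poly[symmetric]) (simp only: q_def)
  finally show ?thesis unfolding N_def .
qed

lemma KI_alg:
  fixes r y :: real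
  assumes nz: "1 - y \<noteq> 0"
  shows "(- y / (1 - y)\<^sup>2) * (r - 1)\<^sup>2 = ((1 - r) / (1 - y)) * (1 - (1 - r) / (1 - y) - r)"
proof -
  have "1 - (1 - r) / (1 - y) - r = ((1 - y) - (1 - r) - r * (1 - y)) / (1 - y)" using nz by (simp add: field_simps)
  also have "(1 - y) - (1 - r) - r * (1 - y) = - y * (1 - r)" by (simp add: algebra_simps)
  finally have e: "1 - (1 - r) / (1 - y) - r = - y * (1 - r) / (1 - y)" .
  have "(r - 1)\<^sup>2 = (1 - r) * (1 - r)" by (simp add: power2_eq_square algebra_simps)
  then show ?thesis unfolding e using nz by (simp add: power2_eq_square)
qed

lemma KI2_alg:
  fixes r x :: real
  assumes nz: "1 - r * x \<noteq> 0"
  shows "(- (r * x) / (1 - r * x)\<^sup>2) * (r - 1) * (1 - x) = (1 - (1 - r) / (1 - r * x)) * ((1 - r) / (1 - r * x)) * x"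
proof -
  have "1 - (1 - r) / (1 - r * x) = r * (1 - x) / (1 - r * x)" using nz by (simp add: field_simps algebra_simps)
  moreover have "(- (r * x) / d\<^sup>2) * (r - 1) * (1 - x) = (r * (1 - x) / d) * ((1 - r) / d) * x" if "d \<noteq> 0" for d
    using that by (simp add: power2_eq_square field_simps)
  ultimately show ?thesis using nz by simp
qed

lemma hgen_alg:
  fixes r mu a Cc :: real
  assumes K: "K \<ge> 1" and i: "i \<le> K"
    and KI: "Cc * (r - 1)\<^sup>2 = a * (1 - a - r)"
    and KI2: "Cc * (r - 1) * (1 - r ^ K) = (1 - a) * a * r ^ K"
  shows "gen (r * mu) mu K (\<lambda>j. Cc * ((real j * (r - 1) - 1) * r ^ j + 1)) i
     = mu * (1 - a) * (a * r ^ i) - Sop mu K (\<lambda>j. a * r ^ j) i"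
proof -
  define h where "h j = Cc * ((real j * (r - 1) - 1) * r ^ j + 1)" for j
  have "gen (r * mu) mu K h i = mu * (1 - a) * (a * r ^ i) - Sop mu K (\<lambda>j. a * r ^ j) i"
  proof (cases i)
    case 0
    have "gen (r * mu) mu K h i = mu * (h 1 - r * h 0)"
      using 0 K unfolding gen_def Lop_def Sop_def by (simp add: algebra_simps)
    also have "h 1 - r * h 0 = Cc * (r - 1)\<^sup>2" by (simp add: h_def power2_eq_square algebra_simps)
    also have "mu * (Cc * (r - 1)\<^sup>2) = mu * (1 - a) * (a * r ^ i) - Sop mu K (\<lambda>j. a * r ^ j) i"
      unfolding KI using 0 K by (simp add: Sop_def algebra_simps)
    finally show ?thesis .
  next
    case (Suc k)
    show ?thesis
    proof (cases "i < K")
      case True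
      have "gen (r * mu) mu K h i = mu * (r * h k + h (Suc (Suc k)) - (r + 1) * h (Suc k))"
        using Suc True unfolding gen_def Lop_def Sop_def by (simp add: algebra_simps)
      also have "r * h k + h (Suc (Suc k)) - (r + 1) * h (Suc k) = Cc * (r - 1)\<^sup>2 * r ^ Suc k"
        by (simp add: h_def power2_eq_square algebra_simps)
      also have "mu * (Cc * (r - 1)\<^sup>2 * r ^ Suc k) = mu * (1 - a) * (a * r ^ i) - Sop mu K (\<lambda>j. a * r ^ j) i"
        unfolding KI using Suc True by (simp add: Sop_def algebra_simps)
      finally show ?thesis .
    next
      case False
      then have iK: "i = K" using i by simp
      have "gen (r * mu) mu K h i = mu * (r * h k - h (Suc k))"
        using Suc iK unfolding gen_def Lop_def Sop_def by (simp add: algebra_simps)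
      also have "r * h k - h (Suc k) = Cc * (r - 1) * (1 - r ^ Suc k)"
        by (simp add: h_def algebra_simps)
      also have "mu * (Cc * (r - 1) * (1 - r ^ Suc k)) = mu * (1 - a) * (a * r ^ i) - Sop mu K (\<lambda>j. a * r ^ j) i"
      proof -
        have k2: "Cc * (r - 1) * (1 - r ^ Suc k) = (1 - a) * a * r ^ Suc k" using KI2 Suc iK by simp
        show ?thesis unfolding k2 using Suc iK by (simp add: Sop_def algebra_simps)
      qed
      finally show ?thesis .
    qed
  qed
  then show ?thesis unfolding h_def .
qed

lemma L_eq1:
  fixes k c :: real assumes c: "c = k + 1" and cnz: "c \<noteq> 0"
  shows "- (k * c * (k + 2) * (3 * k + 1) / 12) / (2 * c\<^sup>2)
     - (- (k * c * (k + 2) / 3) / (2 * c\<^sup>2)) * (k / 2) = - (k * (k + 2) / 24)"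
proof -
  have "- (k * c * (k + 2) * (3 * k + 1) / 12) / (2 * c\<^sup>2)
     - (- (k * c * (k + 2) / 3) / (2 * c\<^sup>2)) * (k / 2) = k * (k + 2) * (2 * k - (3 * k + 1)) / (24 * c)"
    using cnz by (simp add: field_simps power2_eq_square)
  also have "2 * k - (3 * k + 1) = - c" using c by simp
  also have "k * (k + 2) * (- c) / (24 * c) = - (k * (k + 2) / 24)" using cnz by simp
  finally show ?thesis .
qed

context mm1k begin

lemma lam_eq: "lam = rho * mu" using mu by (simp add: rho_def)


lemma hgen_eq1:
  assumes r1: "rho = 1" and i: "i \<le> K"
  shows "gen lam mu K (\<lambda>j. - (real j * (real j + 1)) / (2 * (real K + 1)\<^sup>2)) i = theta * sp i - Sop mu K sp i"
proof -
  obtain c where c: "c = real K + 1" by blast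
  have cnz: "c \<noteq> 0" using c by simp
  define h where "h j = - (real j * (real j + 1)) / (2 * c\<^sup>2)" for j
  have lm: "lam = mu" using lam_eq r1 by simp
  have spc: "sp j = 1 / c" for j using r1 c by (simp add: sp_def mm1k_pi_def)
  have th: "theta = mu * (1 - 1 / c)" by (simp add: theta_def spc)
  have "gen lam mu K h i = theta * sp i - Sop mu K sp i"
  proof (cases i)
    case 0
    have "gen lam mu K h i = mu * (h 1 - h 0)"
      using 0 K unfolding gen_def Lop_def Sop_def by (simp add: lm algebra_simps)
    also have "\<dots> = theta * sp i - Sop mu K sp i"
      using 0 K cnz unfolding th spc Sop_def h_def by (simp add: field_simps power2_eq_square)
    finally show ?thesis .
  next
    case (Suc k)
    show ?thesis
    proof (cases "i < K")
      case True
      have "gen lam mu K h i = mu * (h k + h (Suc (Suc k)) - 2 * h (Suc k))"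
        using Suc True unfolding gen_def Lop_def Sop_def by (simp add: lm algebra_simps)
      also have "\<dots> = theta * sp i - Sop mu K sp i"
        using True Suc cnz unfolding th spc Sop_def h_def by (simp add: field_simps power2_eq_square)
      finally show ?thesis .
    next
      case False
      then have iK: "K = Suc k" using i Suc by simp
      have "gen lam mu K h i = mu * (h k - h (Suc k))"
        using Suc iK unfolding gen_def Lop_def Sop_def by (simp add: lm algebra_simps)
      also have "\<dots> = theta * sp i - Sop mu K sp i"
      proof -
        have k: "real k = c - 2" using c iK by simp
        show ?thesis
          using Suc iK cnz unfolding th spc Sop_def h_def by (simp add: k field_simps power2_eq_square)
      qed
      finally show ?thesis .
    qed
  qed
  then show ?thesis unfolding h_def c .
qed


lemma limit_ne1:
  assumes r1: "rho \<noteq> 1"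
  shows "((\<lambda>t. mm1k_cov K p t) \<longlongrightarrow> mm1k_cov_limit rho K) at_top"
proof -
  obtain r where r: "r = rho" by blast
  obtain x where x: "x = r ^ K" by blast
  have r1': "r \<noteq> 1" using r r1 by simp
  have p1: "r ^ (K + 1) = r * x" and p2: "r ^ (K + 2) = r * r * x" by (simp_all add: x)
  have rx: "1 - r * x \<noteq> 0" using norm_const_pos[OF rho_pos r1, of K] r p1 by auto
  define a where "a = (1 - r) / (1 - r * x)"
  define Cc where "Cc = - (r * x) / (1 - r * x)\<^sup>2"
  define h where "h j = Cc * ((real j * (r - 1) - 1) * r ^ j + 1)" for j
  have spa: "sp j = a * r ^ j" for j using r1 r p1 by (simp add: sp_def mm1k_pi_def a_def)
  have th: "theta = mu * (1 - a)" by (simp add: theta_def spa)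
  have hr: "lam = r * mu" using mu r by (simp add: rho_def)
  have KI: "Cc * (r - 1)\<^sup>2 = a * (1 - a - r)"
    unfolding Cc_def a_def by (rule KI_alg) (use rx in simp)
  have KI2: "Cc * (r - 1) * (1 - r ^ K) = (1 - a) * a * r ^ K"
    unfolding Cc_def a_def x[symmetric] by (rule KI2_alg[OF rx])
  have hgen: "gen lam mu K h i = theta * sp i - Sop mu K sp i" if i: "i \<le> K" for i
  proof -
    have 1: "theta * sp i - Sop mu K sp i = mu * (1 - a) * (a * r ^ i) - Sop mu K (\<lambda>j. a * r ^ j) i"
      unfolding th spa ..
    have 2: "gen lam mu K h i = gen (r * mu) mu K h i" by (simp only: hr)
    show ?thesis unfolding 1 2 h_def by (rule hgen_alg[OF K i KI KI2])
  qed
  note lim = cov_limit_general[OF hgen]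
  define S0 where "S0 = (\<Sum>i\<le>K. r ^ i)"
  define S1 where "S1 = (\<Sum>i\<le>K. real i * r ^ i)"
  define S2 where "S2 = (\<Sum>i\<le>K. (real i)\<^sup>2 * r ^ i)"
  have sum_ih: "(\<Sum>i\<le>K. real i * h i) = Cc * ((r - 1) * S2 - S1 + real K * (real K + 1) / 2)"
  proof -
    have "(\<Sum>i\<le>K. real i * h i) = (\<Sum>i\<le>K. Cc * ((r - 1) * ((real i)\<^sup>2 * r ^ i) - real i * r ^ i + real i))"
      by (intro sum.cong refl) (simp add: h_def power2_eq_square algebra_simps)
    also have "\<dots> = Cc * (\<Sum>i\<le>K. (r - 1) * ((real i)\<^sup>2 * r ^ i) - real i * r ^ i + real i)"
      by (simp only: sum_distrib_left)
    also have "(\<Sum>i\<le>K. (r - 1) * ((real i)\<^sup>2 * r ^ i) - real i * r ^ i + real i) = (r - 1) * S2 - S1 + (\<Sum>i\<le>K. real i)"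
      by (simp only: S1_def S2_def sum.distrib sum_subtractf sum_distrib_left)
    finally show ?thesis by (simp add: N1_closed)
  qed
  have sum_h: "(\<Sum>i\<le>K. h i) = Cc * ((r - 1) * S1 - S0 + (real K + 1))"
  proof -
    have "(\<Sum>i\<le>K. h i) = (\<Sum>i\<le>K. Cc * ((r - 1) * (real i * r ^ i) - r ^ i + 1))"
      by (intro sum.cong refl) (simp add: h_def algebra_simps)
    also have "\<dots> = Cc * (\<Sum>i\<le>K. (r - 1) * (real i * r ^ i) - r ^ i + 1)"
      by (simp only: sum_distrib_left)
    also have "(\<Sum>i\<le>K. (r - 1) * (real i * r ^ i) - r ^ i + 1) = (r - 1) * S1 - S0 + (\<Sum>i\<le>K. 1)"
      by (simp only: S0_def S1_def sum.distrib sum_subtractf sum_distrib_left)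
    finally show ?thesis by simp
  qed
  have sum_sp: "(\<Sum>i\<le>K. real i * sp i) = a * S1"
    by (simp add: spa S1_def sum_distrib_left mult_ac)
  have s0: "(r - 1) * S0 = r * x - 1" unfolding S0_def using S0_closed[of r K] p1 by simp
  have s1: "(r - 1)\<^sup>2 * S1 = real K * (r * r * x) - (real K + 1) * (r * x) + r"
    unfolding S1_def by (rule S1_closed[of r K, unfolded p1 p2])
  have s2: "(1 - r) ^ 3 * S2 = r * (1 + r - (real K + 1)\<^sup>2 * x + (2 * (real K)\<^sup>2 + 2 * real K - 1) * (r * x) - (real K)\<^sup>2 * (r * r * x))"
    unfolding S2_def by (rule S2_closed[of r K, unfolded p1 p2 x[symmetric]])
  have L: "(\<Sum>i\<le>K. real i * h i) - (\<Sum>i\<le>K. h i) * (\<Sum>i\<le>K. real i * sp i) = mm1k_cov_limit rho K"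
  proof -
    have "(\<Sum>i\<le>K. real i * h i) - (\<Sum>i\<le>K. h i) * (\<Sum>i\<le>K. real i * sp i)
        = (- (r * x) / (1 - r * x)\<^sup>2) * ((r - 1) * S2 - S1 + real K * (real K + 1) / 2)
          - (- (r * x) / (1 - r * x)\<^sup>2) * ((r - 1) * S1 - S0 + (real K + 1)) * ((1 - r) / (1 - r * x) * S1)"
      unfolding sum_ih sum_h sum_sp Cc_def a_def by (simp add: mult.assoc)
    also have "\<dots> = r * x * ((real K)\<^sup>2 * (r - 1)\<^sup>2 * (1 + 3 * (r * x)) - 2 * r * (x - 1) * (-2 + r + r * r * x)
        + real K * (r - 1) * (-1 + 3 * r - 7 * (r * x) + 5 * (r * r * x))) / (2 * (r - 1)\<^sup>2 * (r * x - 1) ^ 3)"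
      by (rule final_alg[OF r1' rx s0 s1 s2])
    also have "\<dots> = mm1k_cov_limit rho K"
      unfolding mm1k_cov_limit_def using r1 by (simp add: r[symmetric] p1 p2 x[symmetric] mult.assoc)
    finally show ?thesis .
  qed
  show ?thesis using lim unfolding L .
qed

lemma limit_eq1:
  assumes r1: "rho = 1"
  shows "((\<lambda>t. mm1k_cov K p t) \<longlongrightarrow> mm1k_cov_limit rho K) at_top"
proof -
  define h where "h j = - (real j * (real j + 1)) / (2 * (real K + 1)\<^sup>2)" for j
  have hgen: "gen lam mu K h i = theta * sp i - Sop mu K sp i" if "i \<le> K" for i
    unfolding h_def by (rule hgen_eq1[OF r1 that])
  note lim = cov_limit_general[OF hgen]
  have spc: "sp j = 1 / (real K + 1)" for j using r1 by (simp add: sp_def mm1k_pi_def)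
  have a: "(\<Sum>i\<le>K. real i * h i) = - (real K * (real K + 1) * (real K + 2) * (3 * real K + 1) / 12) / (2 * (real K + 1)\<^sup>2)"
    unfolding h_def by (simp add: sum_divide_distrib[symmetric] sum_negf P3_closed)
  have b: "(\<Sum>i\<le>K. h i) = - (real K * (real K + 1) * (real K + 2) / 3) / (2 * (real K + 1)\<^sup>2)"
    unfolding h_def by (simp add: sum_divide_distrib[symmetric] sum_negf P2_closed)
  have c: "(\<Sum>i\<le>K. real i * sp i) = real K / 2"
  proof -
    have "(\<Sum>i\<le>K. real i * sp i) = (\<Sum>i\<le>K. real i) / (real K + 1)"
      by (simp add: spc sum_divide_distrib)
    also have "\<dots> = real K / 2" using N1_closed[of K] by (simp add: field_simps)
    finally show ?thesis .
  qed
  have L: "(\<Sum>i\<le>K. real i * h i) - (\<Sum>i\<le>K. h i) * (\<Sum>i\<le>K. real i * sp i) = mm1k_cov_limit rho K"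
    unfolding a b c mm1k_cov_limit_def using r1 L_eq1[of "real K + 1" "real K"] by simp
  show ?thesis using lim unfolding L .
qed

end

theorem mainTheorem6:
  fixes lam mu :: real and K :: nat and p :: "real \<Rightarrow> nat \<Rightarrow> nat \<Rightarrow> real"
  assumes "lam > 0" and "mu > 0" and "K \<ge> 1"
    and init: "\<forall>i\<le>K. \<forall>n. p 0 i n = (if n = 0 then mm1k_pi (lam / mu) K i else 0)"
    and forward: "\<forall>t\<ge>0. \<forall>i\<le>K. \<forall>n.
        ((\<lambda>s. p s i n) has_real_derivative mm1k_rhs lam mu K p t i n) (at t within {0..})"
  shows "((\<lambda>t. mm1k_cov K p t) \<longlongrightarrow> mm1k_cov_limit (lam / mu) K) at_top"
proof -
  interpret mm1k lam mu K p using assms by unfold_locales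
  have e: "lam / mu = rho" by (simp add: rho_def)
  show ?thesis
  proof (cases "rho = 1")
    case True then show ?thesis unfolding e by (rule limit_eq1)
  next
    case False then show ?thesis unfolding e by (rule limit_ne1)
  qed
qed

end
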